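(* Let $\Gamma$ and $\tilde\Gamma$ be two generalized cospectral signed bipartite graphs with a common characteristic polynomial $\phi(x)$ that is irreducible over $\mathbb{Q}$. Suppose their adjacency matrices are $$A=A(\Gamma)=\begin{bmatrix} O & M\\ M^{\mathrm T} & O\end{bmatrix},\qquad \tilde A=A(\tilde\Gamma)=\begin{bmatrix} O & \tilde M\\ \tilde M^{\mathrm T} & O\end{bmatrix}.$$ Then there exists a regular orthogonal matrix $Q$ such that $Q^{\mathrm T}AQ=\tilde A$, where $$Q=\begin{bmatrix} Q_1 & O\\ O & Q_2\end{bmatrix}\quad\text{or}\quad Q=\begin{bmatrix} O & Q_1\\ Q_2 & O\end{bmatrix},$$ with $Q_1$ and $Q_2$ regular rational orthogonal matrices.
   Context: A signed graph is a simple graph with each edge assigned a sign $\pm1$; its adjacency matrix has entry equal to the sign of the edge for adjacent vertices and $0$ otherwise. A signed bipartite graph is a signed graph whose underlying graph is bipartite; the vertices are ordered so that the adjacency matrix has the displayed block form. Two signed graphs with adjacency matrices $A,\tilde A$ are generalized cospectral if $\det(xI-A)=\det(xI-\tilde A)$ and $\det(xI-(J-I-A))=\det(xI-(J-I-\tilde A))$, $J$ the all-ones matrix. A square matrix $Q$ is orthogonal if $Q^{\mathrm T}Q=I$, rational if all entries are rational, and regular if $Qe=e$, where $e$ is the all-ones vector. *)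

theory Defs
  imports "Jordan_Normal_Form.Char_Poly" "HOL-Computational_Algebra.Polynomial_Factorial"
begin

text \<open>Adjacency matrix of a signed bipartite graph whose vertex classes have sizes p and q,
  in the block form [O M; M^T O], with M a p x q matrix with entries in {-1,0,1}
  (entry 0: no edge; entry +-1: edge with that sign).\<close>
definition signed_bip_adj :: "nat \<Rightarrow> nat \<Rightarrow> int mat \<Rightarrow> int mat" where
  "signed_bip_adj p q M = four_block_mat (0\<^sub>m p p) M (transpose_mat M) (0\<^sub>m q q)"

definition sign_block :: "nat \<Rightarrow> nat \<Rightarrow> int mat \<Rightarrow> bool" where
  "sign_block p q M \<longleftrightarrow> M \<in> carrier_mat p q \<and>
     (\<forall>i<p. \<forall>j<q. M $$ (i,j) \<in> {-1, 0, 1})"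

definition all_ones_mat :: "nat \<Rightarrow> 'a::one mat" ("J\<^sub>m") where
  "J\<^sub>m n = mat n n (\<lambda>_. 1)"

definition gen_cospectral :: "int mat \<Rightarrow> int mat \<Rightarrow> bool" where
  "gen_cospectral A B \<longleftrightarrow>
     char_poly A = char_poly B \<and>
     char_poly (J\<^sub>m (dim_row A) - 1\<^sub>m (dim_row A) - A) = char_poly (J\<^sub>m (dim_row B) - 1\<^sub>m (dim_row B) - B)"

definition orthogonal_mat :: "'a::comm_ring_1 mat \<Rightarrow> bool" where
  "orthogonal_mat Q \<longleftrightarrow> Q \<in> carrier_mat (dim_row Q) (dim_row Q) \<and>
     transpose_mat Q * Q = 1\<^sub>m (dim_row Q)"

definition regular_mat :: "'a::comm_ring_1 mat \<Rightarrow> bool" where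
  "regular_mat Q \<longleftrightarrow> Q *\<^sub>v vec (dim_col Q) (\<lambda>_. 1) = vec (dim_row Q) (\<lambda>_. 1)"

end

theory Submission
  imports Defs "HOL-Computational_Algebra.Field_as_Ring"
begin


lemma mat_vec_zero[simp]: "A \<in> carrier_mat nr nc \<Longrightarrow> A *\<^sub>v 0\<^sub>v nc = 0\<^sub>v nr"
  by (rule eq_vecI) (auto simp: scalar_prod_def)

lemma smult_vec_zero[simp]: "(c::rat) \<cdot>\<^sub>v 0\<^sub>v n = 0\<^sub>v n"
  by (rule eq_vecI) auto

lemma zero_scalar_prod_rat[simp]: "(w :: rat vec) \<in> carrier_vec n \<Longrightarrow> 0\<^sub>v n \<bullet> w = 0"
  "(w :: rat vec) \<in> carrier_vec n \<Longrightarrow> w \<bullet> 0\<^sub>v n = 0"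
  unfolding scalar_prod_def by (auto intro!: sum.neutral)

fun pw :: "rat mat \<Rightarrow> nat \<Rightarrow> rat vec \<Rightarrow> rat vec" where
  "pw A 0 v = v"
| "pw A (Suc k) v = A *\<^sub>v pw A k v"

lemma pw_carrier: "A \<in> carrier_mat n n \<Longrightarrow> v \<in> carrier_vec n \<Longrightarrow> pw A k v \<in> carrier_vec n"
  by (induct k) auto

definition ap :: "rat mat \<Rightarrow> rat poly \<Rightarrow> rat vec \<Rightarrow> rat vec" where
  "ap A f v = vec (dim_row A) (\<lambda>i. \<Sum>k\<le>degree f. coeff f k * (pw A k v $ i))"

lemma ap_carrier: "A \<in> carrier_mat n n \<Longrightarrow> ap A f v \<in> carrier_vec n"
  by (auto simp: ap_def)

lemma ap_index: assumes "A \<in> carrier_mat n n" "i < n" "degree f < m"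
  shows "ap A f v $ i = (\<Sum>k<m. coeff f k * (pw A k v $ i))"
proof -
  have "ap A f v $ i = (\<Sum>k\<le>degree f. coeff f k * (pw A k v $ i))"
    using assms by (auto simp: ap_def)
  also have "\<dots> = (\<Sum>k<m. coeff f k * (pw A k v $ i))"
    by (rule sum.mono_neutral_left) (use assms in \<open>auto simp: coeff_eq_0\<close>)
  finally show ?thesis .
qed

lemma mat_vec_sum: assumes A: "(A :: rat mat) \<in> carrier_mat n n" and w: "\<And>k. w k \<in> carrier_vec n" and i: "i < n"
  shows "(\<Sum>k<m. c k * ((A *\<^sub>v w k) $ i)) = (A *\<^sub>v vec n (\<lambda>j. \<Sum>k<m. c k * (w k $ j))) $ i"
proof -
  have dw: "\<And>k. dim_vec (w k) = n" using w by auto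
  have "(\<Sum>k<m. c k * ((A *\<^sub>v w k) $ i)) = (\<Sum>k<m. c k * (\<Sum>j<n. A $$ (i,j) * w k $ j))"
    using A i by (auto simp: scalar_prod_def lessThan_atLeast0 dw)
  also have "\<dots> = (\<Sum>j<n. A $$ (i,j) * (\<Sum>k<m. c k * w k $ j))"
    unfolding sum_distrib_left by (subst sum.swap) (intro sum.cong refl, simp add: mult.left_commute)
  also have "\<dots> = (A *\<^sub>v vec n (\<lambda>j. \<Sum>k<m. c k * (w k $ j))) $ i"
    using A w i by (auto simp: scalar_prod_def lessThan_atLeast0)
  finally show ?thesis .
qed

lemma ap_pCons: assumes A: "A \<in> carrier_mat n n" and v: "v \<in> carrier_vec n"
  shows "ap A (pCons a f) v = a \<cdot>\<^sub>v v + A *\<^sub>v ap A f v"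
proof (rule eq_vecI)
  show "dim_vec (ap A (pCons a f) v) = dim_vec (a \<cdot>\<^sub>v v + A *\<^sub>v ap A f v)"
    using A v by (simp add: ap_def)
  fix i assume "i < dim_vec (a \<cdot>\<^sub>v v + A *\<^sub>v ap A f v)"
  hence i: "i < n" using A v by simp
  define m where "m = degree f + 2"
  have d1: "degree (pCons a f) < Suc m" unfolding m_def by (cases "f = 0") auto
  have d2: "degree f < m" unfolding m_def by simp
  have "ap A (pCons a f) v $ i = (\<Sum>k<Suc m. coeff (pCons a f) k * (pw A k v $ i))"
    by (rule ap_index[OF A i d1])
  also have "\<dots> = a * v $ i + (\<Sum>k<m. coeff f k * ((A *\<^sub>v pw A k v) $ i))"
    by (subst sum.lessThan_Suc_shift) simp
  also have "(\<Sum>k<m. coeff f k * ((A *\<^sub>v pw A k v) $ i)) = (A *\<^sub>v vec n (\<lambda>j. \<Sum>k<m. coeff f k * (pw A k v $ j))) $ i"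
    by (rule mat_vec_sum[OF A pw_carrier[OF A v] i])
  also have "vec n (\<lambda>j. \<Sum>k<m. coeff f k * (pw A k v $ j)) = ap A f v"
  proof (rule eq_vecI)
    fix j assume "j < dim_vec (ap A f v)"
    hence j: "j < n" using A by (simp add: ap_def)
    show "vec n (\<lambda>j. \<Sum>k<m. coeff f k * (pw A k v $ j)) $ j = ap A f v $ j"
      using ap_index[OF A j d2, of v] j by simp
  qed (use A in \<open>simp add: ap_def\<close>)
  finally show "ap A (pCons a f) v $ i = (a \<cdot>\<^sub>v v + A *\<^sub>v ap A f v) $ i"
    using i A v by simp
qed

lemma ap_0: assumes A: "A \<in> carrier_mat n n" shows "ap A 0 v = 0\<^sub>v n"
  using A by (auto simp: ap_def)

lemma ap_const: assumes A: "A \<in> carrier_mat n n" and v: "v \<in> carrier_vec n"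
  shows "ap A [:a:] v = a \<cdot>\<^sub>v v"
  using ap_pCons[OF A v, of a 0] ap_0[OF A] A v by simp

lemma ap_one: assumes A: "A \<in> carrier_mat n n" and v: "v \<in> carrier_vec n"
  shows "ap A 1 v = v"
  using ap_const[OF A v, of 1] by (simp add: one_pCons)

lemma ap_add: assumes A: "A \<in> carrier_mat n n" and v: "v \<in> carrier_vec n"
  shows "ap A (f + g) v = ap A f v + ap A g v"
proof (induction f arbitrary: g)
  case 0
  then show ?case using ap_0[OF A] ap_carrier[OF A] by simp
next
  case (pCons a f)
  obtain b g' where g: "g = pCons b g'" by (cases g)
  have c: "ap A f v \<in> carrier_vec n" "ap A g' v \<in> carrier_vec n" using ap_carrier[OF A] by auto
  show ?case unfolding g add_pCons ap_pCons[OF A v] pCons.IH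
    by (subst mult_add_distrib_mat_vec[OF A c]) (rule eq_vecI, use A v c in \<open>auto simp: algebra_simps\<close>)
qed

lemma ap_smult: assumes A: "A \<in> carrier_mat n n" and v: "v \<in> carrier_vec n"
  shows "ap A (Polynomial.smult c f) v = c \<cdot>\<^sub>v ap A f v"
proof (induction f)
  case 0
  then show ?case using ap_0[OF A] by simp
next
  case (pCons a f)
  have c: "ap A f v \<in> carrier_vec n" using ap_carrier[OF A] by auto
  show ?case unfolding smult_pCons ap_pCons[OF A v] pCons.IH mult_mat_vec[OF A c]
    by (rule eq_vecI, use A v c in \<open>auto simp: algebra_simps\<close>)
qed

lemma ap_diff: assumes A: "A \<in> carrier_mat n n" and v: "v \<in> carrier_vec n"
  shows "ap A (f - g) v = ap A f v - ap A g v"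
proof -
  have "f - g = f + Polynomial.smult (-1) g" by simp
  hence "ap A (f - g) v = ap A (f + Polynomial.smult (-1) g) v" by simp
  also have "\<dots> = ap A f v + (-1) \<cdot>\<^sub>v ap A g v" by (subst ap_add[OF A v], subst ap_smult[OF A v], rule refl)
  also have "\<dots> = ap A f v - ap A g v"
    by (rule eq_vecI, use ap_carrier[OF A] in auto)
  finally show ?thesis .
qed

lemma ap_vadd: assumes A: "A \<in> carrier_mat n n" and u: "u \<in> carrier_vec n" and w: "w \<in> carrier_vec n"
  shows "ap A f (u + w) = ap A f u + ap A f w"
proof (induction f)
  case 0
  then show ?case using ap_0[OF A] by simp
next
  case (pCons a f)
  have c: "ap A f u \<in> carrier_vec n" "ap A f w \<in> carrier_vec n" using ap_carrier[OF A] by auto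
  have uw: "u + w \<in> carrier_vec n" using u w by simp
  show ?case unfolding ap_pCons[OF A uw] ap_pCons[OF A u] ap_pCons[OF A w] pCons.IH
    by (subst mult_add_distrib_mat_vec[OF A c]) (rule eq_vecI, use A u w c in \<open>auto simp: algebra_simps\<close>)
qed

lemma ap_vsmult: assumes A: "A \<in> carrier_mat n n" and u: "u \<in> carrier_vec n"
  shows "ap A f (c \<cdot>\<^sub>v u) = c \<cdot>\<^sub>v ap A f u"
proof (induction f)
  case 0
  then show ?case using ap_0[OF A] by simp
next
  case (pCons a f)
  have c: "ap A f u \<in> carrier_vec n" using ap_carrier[OF A] by auto
  have cu: "c \<cdot>\<^sub>v u \<in> carrier_vec n" using u by simp
  show ?case unfolding ap_pCons[OF A cu] ap_pCons[OF A u] pCons.IH mult_mat_vec[OF A c]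
    by (rule eq_vecI, use A u c in \<open>auto simp: algebra_simps\<close>)
qed

lemma ap_vzero: assumes A: "A \<in> carrier_mat n n"
  shows "ap A f (0\<^sub>v n) = 0\<^sub>v n"
proof -
  have "ap A f (0\<^sub>v n) = ap A f (0 \<cdot>\<^sub>v 0\<^sub>v n)" by simp
  also have "\<dots> = 0 \<cdot>\<^sub>v ap A f (0\<^sub>v n)" by (rule ap_vsmult[OF A], simp)
  also have "\<dots> = 0\<^sub>v n" by (rule eq_vecI) (use ap_carrier[OF A, of f "0\<^sub>v n"] in auto)
  finally show ?thesis .
qed

lemma ap_comm: assumes A: "A \<in> carrier_mat n n" and R: "R \<in> carrier_mat n n" and RA: "R * A = A * R"
  and v: "v \<in> carrier_vec n"
  shows "R *\<^sub>v ap A f v = ap A f (R *\<^sub>v v)"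
proof (induction f)
  case 0
  then show ?case using ap_0[OF A] R by simp
next
  case (pCons a f)
  have c: "ap A f v \<in> carrier_vec n" using ap_carrier[OF A] by auto
  have Rv: "R *\<^sub>v v \<in> carrier_vec n" using R v by simp
  have "R *\<^sub>v (A *\<^sub>v ap A f v) = A *\<^sub>v (R *\<^sub>v ap A f v)"
    using assoc_mult_mat_vec[OF R A c, symmetric] assoc_mult_mat_vec[OF A R c] RA by simp
  then show ?case unfolding ap_pCons[OF A v] ap_pCons[OF A Rv]
    using pCons.IH mult_add_distrib_mat_vec[OF R, of "a \<cdot>\<^sub>v v" "A *\<^sub>v ap A f v"] mult_mat_vec[OF R v] A v c
    by simp
qed

lemma ap_A: assumes A: "A \<in> carrier_mat n n" and v: "v \<in> carrier_vec n"
  shows "A *\<^sub>v ap A f v = ap A f (A *\<^sub>v v)"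
  by (rule ap_comm[OF A A refl v])

lemma ap_mult: assumes A: "A \<in> carrier_mat n n" and v: "v \<in> carrier_vec n"
  shows "ap A (f * g) v = ap A f (ap A g v)"
proof (induction f)
  case 0
  then show ?case using ap_0[OF A] by simp
next
  case (pCons a f)
  have c: "ap A g v \<in> carrier_vec n" using ap_carrier[OF A] by auto
  show ?case unfolding mult_pCons_left ap_add[OF A v] ap_smult[OF A v] ap_pCons[OF A v] ap_pCons[OF A c]
      pCons.IH
    by (rule eq_vecI, use A v c ap_carrier[OF A] in auto)
qed

lemma ap_sym: assumes A: "A \<in> carrier_mat n n" and S: "transpose_mat A = A"
  and u: "u \<in> carrier_vec n" and w: "w \<in> carrier_vec n"
  shows "ap A f u \<bullet> w = u \<bullet> ap A f w"
  using w
proof (induction f arbitrary: w)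
  case 0
  then show ?case using ap_0[OF A] u by simp
next
  case (pCons a f)
  note w = pCons.prems
  have c: "ap A f u \<in> carrier_vec n" "ap A f w \<in> carrier_vec n" using ap_carrier[OF A] by auto
  have Aw: "A *\<^sub>v w \<in> carrier_vec n" using A w by simp
  have "(A *\<^sub>v ap A f u) \<bullet> w = ap A f u \<bullet> (A *\<^sub>v w)"
    using transpose_vec_mult_scalar[OF A w c(1)] S by simp
  also have "\<dots> = u \<bullet> ap A f (A *\<^sub>v w)" using pCons.IH[OF Aw] by simp
  also have "\<dots> = u \<bullet> (A *\<^sub>v ap A f w)" using ap_A[OF A w] by simp
  finally have *: "(A *\<^sub>v ap A f u) \<bullet> w = u \<bullet> (A *\<^sub>v ap A f w)" .
  show ?case unfolding ap_pCons[OF A u] ap_pCons[OF A w]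
    using * A u w c by (simp add: add_scalar_prod_distrib[of _ n] scalar_prod_add_distrib[of _ n])
qed



lemma coeff_term: "coeff ((p :: rat poly) * ([:0,1:] * (if j = l then 1 else 0) + [:- a:])) k =
   (if j = l then (if k = 0 then 0 else coeff p (k - 1)) else 0) - a * coeff p k"
  by (cases "j = l"; cases k) (auto simp: algebra_simps)

lemma CH_coeff: assumes A: "(A :: rat mat) \<in> carrier_mat n n" and i: "i < n" and l: "l < n"
  shows "(if k = 0 then 0 else coeff (adj_mat (char_poly_matrix A) $$ (i,l)) (k-1))
    - (\<Sum>j<n. coeff (adj_mat (char_poly_matrix A) $$ (i,j)) k * A $$ (j,l))
    = (if i = l then coeff (char_poly A) k else 0)"
proof -
  define P where "P = char_poly_matrix A"
  have P: "P \<in> carrier_mat n n" using A unfolding P_def by simp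
  define Adj where "Adj = adj_mat P"
  have Adj: "Adj \<in> carrier_mat n n" using adj_mat(1)[OF P] unfolding Adj_def .
  have AdjP: "Adj * P = char_poly A \<cdot>\<^sub>m 1\<^sub>m n"
    using adj_mat(3)[OF P] unfolding Adj_def P_def char_poly_def by simp
  have "(Adj * P) $$ (i,l) = (\<Sum>j<n. Adj $$ (i,j) * P $$ (j,l))"
    using Adj P i l by (auto simp: scalar_prod_def lessThan_atLeast0)
  also have "\<dots> = (\<Sum>j<n. Adj $$ (i,j) * ([:0,1:] * (if j = l then 1 else 0) + [:- A $$ (j,l):]))"
    by (rule sum.cong) (use A l in \<open>auto simp: P_def char_poly_matrix_def\<close>)
  finally have "coeff ((Adj * P) $$ (i,l)) k =
      (\<Sum>j<n. (if j = l then (if k = 0 then 0 else coeff (Adj $$ (i,j)) (k - 1)) else 0) - A $$ (j,l) * coeff (Adj $$ (i,j)) k)"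
    by (simp only: coeff_sum coeff_term)
  also have "\<dots> = (if k = 0 then 0 else coeff (Adj $$ (i,l)) (k - 1)) - (\<Sum>j<n. coeff (Adj $$ (i,j)) k * A $$ (j,l))"
    using l by (simp add: sum_subtractf mult.commute)
  finally have E: "coeff ((Adj * P) $$ (i,l)) k = (if k = 0 then 0 else coeff (Adj $$ (i,l)) (k - 1)) - (\<Sum>j<n. coeff (Adj $$ (i,j)) k * A $$ (j,l))" .
  have F: "coeff ((Adj * P) $$ (i,l)) k = (if i = l then coeff (char_poly A) k else 0)"
    unfolding AdjP using i l by simp
  show ?thesis using F[unfolded E] unfolding Adj_def P_def .
qed

lemma cayley_hamilton_vec: assumes A: "(A :: rat mat) \<in> carrier_mat n n" and v: "v \<in> carrier_vec n"
  shows "ap A (char_poly A) v = 0\<^sub>v n"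
proof -
  define Adj where "Adj = adj_mat (char_poly_matrix A)"
  define D where "D = (\<Sum>i<n. \<Sum>j<n. degree (Adj $$ (i,j))) + degree (char_poly A)"
  define N where "N = D + 2"
  define Bm where "Bm k i j = (if k = 0 then 0 else coeff (Adj $$ (i,j)) (k-1))" for k i j
  define t where "t k i = (\<Sum>j<n. Bm k i j * (pw A k v $ j))" for k i
  have deg: "degree (Adj $$ (i,j)) \<le> D" if "i < n" "j < n" for i j
  proof -
    have "degree (Adj $$ (i,j)) \<le> (\<Sum>j<n. degree (Adj $$ (i,j)))"
      by (rule member_le_sum) (use that in auto)
    also have "\<dots> \<le> (\<Sum>i<n. \<Sum>j<n. degree (Adj $$ (i,j)))"
      by (rule member_le_sum[of i "{..<n}" "\<lambda>i. \<Sum>j<n. degree (Adj $$ (i,j))"]) (use that in auto)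
    finally show ?thesis unfolding D_def by simp
  qed
  have tel: "coeff (char_poly A) k * (pw A k v $ i) = t k i - t (Suc k) i" if i: "i < n" for k i
  proof -
    let ?w = "pw A k v"
    have w: "?w \<in> carrier_vec n" by (rule pw_carrier[OF A v])
    have "t (Suc k) i = (\<Sum>j<n. coeff (Adj $$ (i,j)) k * (\<Sum>l<n. A $$ (j,l) * ?w $ l))"
      unfolding t_def Bm_def using A w by (auto intro!: sum.cong simp: scalar_prod_def lessThan_atLeast0)
    also have "\<dots> = (\<Sum>l<n. (\<Sum>j<n. coeff (Adj $$ (i,j)) k * A $$ (j,l)) * ?w $ l)"
      unfolding sum_distrib_left sum_distrib_right by (subst sum.swap) (simp add: mult.assoc)
    finally have "t k i - t (Suc k) i = (\<Sum>l<n. (Bm k i l - (\<Sum>j<n. coeff (Adj $$ (i,j)) k * A $$ (j,l))) * ?w $ l)"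
      unfolding t_def by (simp add: sum_subtractf algebra_simps)
    also have "\<dots> = (\<Sum>l<n. (if i = l then coeff (char_poly A) k else 0) * ?w $ l)"
    proof (rule sum.cong[OF refl])
    fix l assume "l \<in> {..<n}"
    hence l: "l < n" by simp
    have "Bm k i l - (\<Sum>j<n. coeff (Adj $$ (i,j)) k * A $$ (j,l)) = (if i = l then coeff (char_poly A) k else 0)"
      using CH_coeff[OF A i l, of k] unfolding Bm_def Adj_def .
    thus "(Bm k i l - (\<Sum>j<n. coeff (Adj $$ (i,j)) k * A $$ (j,l))) * ?w $ l = (if i = l then coeff (char_poly A) k else 0) * ?w $ l"
      by simp
  qed
    also have "\<dots> = (\<Sum>l<n. if l = i then coeff (char_poly A) k * ?w $ l else 0)"
      by (rule sum.cong) auto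
    also have "\<dots> = coeff (char_poly A) k * ?w $ i" using i by simp
    finally show ?thesis by simp
  qed
  show ?thesis
  proof (rule eq_vecI)
    fix i assume "i < dim_vec (0\<^sub>v n :: rat vec)"
    hence i: "i < n" by simp
    have dN: "degree (char_poly A) < N" unfolding N_def D_def by simp
    have "ap A (char_poly A) v $ i = (\<Sum>k<N. coeff (char_poly A) k * (pw A k v $ i))"
      by (rule ap_index[OF A i dN])
    also have "\<dots> = (\<Sum>k<N. t k i - t (Suc k) i)" using tel[OF i] by simp
    also have "\<dots> = t 0 i - t N i" by (rule sum_lessThan_telescope')
    also have "t 0 i = 0" unfolding t_def Bm_def by simp
    also have "t N i = 0" unfolding t_def Bm_def N_def
      using deg[OF i] by (auto intro!: sum.neutral coeff_eq_0 simp: le_imp_less_Suc)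
    finally show "ap A (char_poly A) v $ i = 0\<^sub>v n $ i" using i by simp
  qed (use A in \<open>simp add: ap_def\<close>)
qed



lemma char_poly_deg: "(A :: rat mat) \<in> carrier_mat n n \<Longrightarrow> degree (char_poly A) = n"
  using degree_monic_char_poly by blast

lemma char_poly_lead: "(A :: rat mat) \<in> carrier_mat n n \<Longrightarrow> coeff (char_poly A) n = 1"
  using degree_monic_char_poly by blast

lemma irr_n_pos: assumes A: "(A :: rat mat) \<in> carrier_mat n n" and irr: "irreducible (char_poly A)"
  shows "0 < n"
proof (rule ccontr)
  assume "\<not> 0 < n"
  hence n: "n = 0" by simp
  have "char_poly A = [:coeff (char_poly A) 0:]"
    using char_poly_deg[OF A] n by (metis degree_0_id)
  also have "\<dots> = 1" using char_poly_lead[OF A] n by (simp add: one_pCons)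
  finally show False using irr by simp
qed

lemma ap_mod: assumes A: "(A :: rat mat) \<in> carrier_mat n n" and v: "v \<in> carrier_vec n"
  shows "ap A h v = ap A (h mod char_poly A) v"
proof -
  have "ap A h v = ap A ((h div char_poly A) * char_poly A + h mod char_poly A) v"
    by simp
  also have "\<dots> = ap A (h div char_poly A) (ap A (char_poly A) v) + ap A (h mod char_poly A) v"
    by (subst ap_add[OF A v], subst ap_mult[OF A v], rule refl)
  also have "\<dots> = ap A (h mod char_poly A) v"
    using cayley_hamilton_vec[OF A v] ap_vzero[OF A] ap_carrier[OF A] by simp
  finally show ?thesis .
qed

lemma ann_dvd: assumes A: "(A :: rat mat) \<in> carrier_mat n n" and irr: "irreducible (char_poly A)"
  and v: "v \<in> carrier_vec n" and v0: "v \<noteq> 0\<^sub>v n" and h: "ap A h v = 0\<^sub>v n"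
  shows "char_poly A dvd h"
proof (rule ccontr)
  assume "\<not> char_poly A dvd h"
  then have "coprime (char_poly A) h"
    by (rule prime_elem_imp_coprime[OF irreducible_imp_prime_elem[OF irr]])
  then have g: "gcd (char_poly A) h = 1" by (simp add: coprime_iff_gcd_eq_1)
  define u where "u = fst (bezout_coefficients (char_poly A) h)"
  define w where "w = snd (bezout_coefficients (char_poly A) h)"
  have uw: "u * char_poly A + w * h = 1" using bezout_coefficients_fst_snd[of "char_poly A" h] g
    unfolding u_def w_def by simp
  have "v = ap A 1 v" using ap_one[OF A v] by simp
  also have "\<dots> = ap A (u * char_poly A + w * h) v" unfolding uw ..
  also have "\<dots> = ap A u (ap A (char_poly A) v) + ap A w (ap A h v)"
    by (simp add: ap_add[OF A v] ap_mult[OF A v])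
  also have "\<dots> = 0\<^sub>v n" unfolding h cayley_hamilton_vec[OF A v] ap_vzero[OF A] by simp
  finally show False using v0 by simp
qed

definition krylov :: "rat mat \<Rightarrow> rat vec \<Rightarrow> rat mat" where
  "krylov A v = mat (dim_row A) (dim_row A) (\<lambda>(i,j). pw A j v $ i)"

lemma krylov_carrier: "A \<in> carrier_mat n n \<Longrightarrow> krylov A v \<in> carrier_mat n n"
  by (auto simp: krylov_def)

lemma krylov_ap: assumes A: "(A :: rat mat) \<in> carrier_mat n n" and v: "v \<in> carrier_vec n"
  and d: "degree f < n"
  shows "ap A f v = krylov A v *\<^sub>v vec n (coeff f)"
proof (rule eq_vecI)
  fix i assume "i < dim_vec (krylov A v *\<^sub>v vec n (coeff f))"
  hence i: "i < n" using A by (simp add: krylov_def)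
  have "ap A f v $ i = (\<Sum>k<n. coeff f k * (pw A k v $ i))" by (rule ap_index[OF A i d])
  also have "\<dots> = (krylov A v *\<^sub>v vec n (coeff f)) $ i"
    using A i by (auto simp: krylov_def scalar_prod_def lessThan_atLeast0 mult.commute intro!: sum.cong)
  finally show "ap A f v $ i = (krylov A v *\<^sub>v vec n (coeff f)) $ i" .
qed (use A in \<open>auto simp: krylov_def ap_def\<close>)

lemma vec_to_poly: assumes c: "(c :: rat vec) \<in> carrier_vec n" and n: "0 < n"
  shows "\<exists>f. degree f < n \<and> vec n (coeff f) = c"
proof -
  define f where "f = (\<Sum>j<n. monom (c $ j) j)"
  have cf: "coeff f k = (if k < n then c $ k else 0)" for k
    unfolding f_def coeff_sum by (auto simp: coeff_monom)
  have "degree f \<le> n - 1" by (rule degree_le) (auto simp: cf)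
  hence "degree f < n" using n by simp
  moreover have "vec n (coeff f) = c" using c by (auto simp: cf)
  ultimately show ?thesis by blast
qed

lemma krylov_det: assumes A: "(A :: rat mat) \<in> carrier_mat n n" and irr: "irreducible (char_poly A)"
  and v: "v \<in> carrier_vec n" and v0: "v \<noteq> 0\<^sub>v n"
  shows "det (krylov A v) \<noteq> 0"
proof
  assume "det (krylov A v) = 0"
  then obtain c where c: "c \<in> carrier_vec n" "c \<noteq> 0\<^sub>v n" "krylov A v *\<^sub>v c = 0\<^sub>v n"
    using det_0_iff_vec_prod_zero[OF krylov_carrier[OF A]] by blast
  obtain f where f: "degree f < n" "vec n (coeff f) = c"
    using vec_to_poly[OF c(1) irr_n_pos[OF A irr]] by blast
  have "ap A f v = 0\<^sub>v n" using krylov_ap[OF A v f(1)] f(2) c(3) by simp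
  hence dvd: "char_poly A dvd f" by (rule ann_dvd[OF A irr v v0])
  have "f = 0"
  proof (rule ccontr)
    assume "f \<noteq> 0"
    from dvd_imp_degree_le[OF dvd this] f(1) char_poly_deg[OF A] show False by simp
  qed
  hence "c = 0\<^sub>v n" using f(2) by auto
  thus False using c(2) by simp
qed

lemma krylov_span: assumes A: "(A :: rat mat) \<in> carrier_mat n n" and irr: "irreducible (char_poly A)"
  and v: "v \<in> carrier_vec n" and v0: "v \<noteq> 0\<^sub>v n" and w: "w \<in> carrier_vec n"
  shows "\<exists>f. w = ap A f v"
proof -
  let ?K = "krylov A v"
  have K: "?K \<in> carrier_mat n n" by (rule krylov_carrier[OF A])
  from det_non_zero_imp_unit[OF K krylov_det[OF A irr v v0], of undefined]
  obtain Ki where Ki: "Ki \<in> carrier_mat n n" "?K * Ki = 1\<^sub>m n"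
    unfolding Units_def ring_mat_def by auto
  have c: "Ki *\<^sub>v w \<in> carrier_vec n" using Ki w by simp
  obtain f where f: "degree f < n" "vec n (coeff f) = Ki *\<^sub>v w"
    using vec_to_poly[OF c irr_n_pos[OF A irr]] by blast
  have "w = (?K * Ki) *\<^sub>v w" using Ki(2) w by simp
  also have "\<dots> = ?K *\<^sub>v (Ki *\<^sub>v w)" by (rule assoc_mult_mat_vec[OF K Ki(1) w])
  also have "\<dots> = ap A f v" using krylov_ap[OF A v f(1)] f(2) by simp
  finally show ?thesis by blast
qed



definition ones :: "nat \<Rightarrow> rat vec" where "ones n = vec n (\<lambda>_. 1)"

lemma ones_carrier[simp]: "ones n \<in> carrier_vec n" by (simp add: ones_def)

lemma ones_nz: "0 < n \<Longrightarrow> ones n \<noteq> 0\<^sub>v n"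
proof
  assume "0 < n" "ones n = 0\<^sub>v n"
  hence "ones n $ 0 = 0\<^sub>v n $ 0" by simp
  thus False using \<open>0 < n\<close> by (simp add: ones_def)
qed

lemma mat_vec_unit: assumes M: "(M :: rat mat) \<in> carrier_mat nr n" and i: "i < nr" and j: "j < n"
  shows "(M *\<^sub>v unit_vec n j) $ i = M $$ (i,j)"
  using M i j by simp

lemma mat_eq_by_vec: assumes M: "(M :: rat mat) \<in> carrier_mat n n" and N: "N \<in> carrier_mat n n"
  and eq: "\<And>v. v \<in> carrier_vec n \<Longrightarrow> M *\<^sub>v v = N *\<^sub>v v"
  shows "M = N"
proof (rule eq_matI)
  fix i j assume "i < dim_row N" "j < dim_col N"
  hence i: "i < n" and j: "j < n" using N by auto
  have "M $$ (i,j) = (M *\<^sub>v unit_vec n j) $ i" using mat_vec_unit[OF M i j] by simp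
  also have "\<dots> = (N *\<^sub>v unit_vec n j) $ i" using eq[of "unit_vec n j"] by simp
  also have "\<dots> = N $$ (i,j)" using mat_vec_unit[OF N i j] .
  finally show "M $$ (i,j) = N $$ (i,j)" .
qed (use M N in auto)

lemma vec_eq_by_scalar: assumes x: "(x :: rat vec) \<in> carrier_vec n" and y: "y \<in> carrier_vec n"
  and eq: "\<And>w. w \<in> carrier_vec n \<Longrightarrow> x \<bullet> w = y \<bullet> w"
  shows "x = y"
proof (rule eq_vecI)
  fix i assume "i < dim_vec y"
  hence i: "i < n" using y by simp
  show "x $ i = y $ i" using eq[of "unit_vec n i"] scalar_prod_right_unit[OF i, of x] scalar_prod_right_unit[OF i, of y]
    by simp
qed (use x y in auto)

lemma orth_by_scalar: assumes Q: "(Q :: rat mat) \<in> carrier_mat n n"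
  and pres: "\<And>u w. u \<in> carrier_vec n \<Longrightarrow> w \<in> carrier_vec n \<Longrightarrow> (Q *\<^sub>v u) \<bullet> (Q *\<^sub>v w) = u \<bullet> w"
  shows "transpose_mat Q * Q = 1\<^sub>m n"
proof (rule mat_eq_by_vec)
  show "transpose_mat Q * Q \<in> carrier_mat n n" using Q by simp
  fix v :: "rat vec" assume v: "v \<in> carrier_vec n"
  have QtQv: "(transpose_mat Q * Q) *\<^sub>v v \<in> carrier_vec n" using Q v by simp
  show "(transpose_mat Q * Q) *\<^sub>v v = 1\<^sub>m n *\<^sub>v v"
  proof (rule vec_eq_by_scalar[OF QtQv])
    show "1\<^sub>m n *\<^sub>v v \<in> carrier_vec n" using v by simp
    fix w :: "rat vec" assume w: "w \<in> carrier_vec n"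
    have "((transpose_mat Q * Q) *\<^sub>v v) \<bullet> w = (transpose_mat Q *\<^sub>v (Q *\<^sub>v v)) \<bullet> w"
      using Q v by (subst assoc_mult_mat_vec[of _ n n _ n]) auto
    also have "\<dots> = (Q *\<^sub>v v) \<bullet> (Q *\<^sub>v w)"
      by (rule transpose_vec_mult_scalar[OF Q w]) (use Q v in simp)
    also have "\<dots> = v \<bullet> w" by (rule pres[OF v w])
    finally show "((transpose_mat Q * Q) *\<^sub>v v) \<bullet> w = (1\<^sub>m n *\<^sub>v v) \<bullet> w" using v by simp
  qed
qed simp

lemma orth_pres: assumes Q: "(Q :: rat mat) \<in> carrier_mat n n" and QQ: "transpose_mat Q * Q = 1\<^sub>m n"
  and u: "u \<in> carrier_vec n" and w: "w \<in> carrier_vec n"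
  shows "(Q *\<^sub>v u) \<bullet> (Q *\<^sub>v w) = u \<bullet> w"
proof -
  have "(Q *\<^sub>v u) \<bullet> (Q *\<^sub>v w) = (transpose_mat Q *\<^sub>v (Q *\<^sub>v u)) \<bullet> w"
    by (rule transpose_vec_mult_scalar[OF Q w, symmetric]) (use Q u in simp)
  also have "\<dots> = ((transpose_mat Q * Q) *\<^sub>v u) \<bullet> w"
    using Q u by (subst assoc_mult_mat_vec[of _ n n _ n]) auto
  finally show ?thesis using QQ u by simp
qed

lemma e_ap: assumes A: "(A :: rat mat) \<in> carrier_mat n n"
  shows "ones n \<bullet> ap A f (ones n) = (\<Sum>k\<le>degree f. coeff f k * (ones n \<bullet> pw A k (ones n)))"
proof -
  have pc: "\<And>k. pw A k (ones n) \<in> carrier_vec n" using pw_carrier[OF A ones_carrier] .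
  have "ones n \<bullet> ap A f (ones n) = (\<Sum>i<n. \<Sum>k\<le>degree f. coeff f k * (pw A k (ones n) $ i))"
    using A by (auto simp: scalar_prod_def ap_def ones_def lessThan_atLeast0)
  also have "\<dots> = (\<Sum>k\<le>degree f. \<Sum>i<n. coeff f k * (pw A k (ones n) $ i))" by (rule sum.swap)
  also have "\<dots> = (\<Sum>k\<le>degree f. coeff f k * (ones n \<bullet> pw A k (ones n)))"
  proof (rule sum.cong[OF refl])
    fix k
    have d: "dim_vec (pw A k (ones n)) = n" using pc[of k] by simp
    have "ones n \<bullet> pw A k (ones n) = (\<Sum>i<n. pw A k (ones n) $ i)"
      unfolding scalar_prod_def d lessThan_atLeast0 by (rule sum.cong) (auto simp: ones_def)
    thus "(\<Sum>i<n. coeff f k * (pw A k (ones n) $ i)) = coeff f k * (ones n \<bullet> pw A k (ones n))"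
      by (simp add: sum_distrib_left)
  qed
  finally show ?thesis .
qed

lemma ap_inner: assumes A: "(A :: rat mat) \<in> carrier_mat n n" and S: "transpose_mat A = A"
  shows "ap A h (ones n) \<bullet> ap A g (ones n) = ones n \<bullet> ap A (h * g) (ones n)"
  using ap_sym[OF A S ones_carrier ap_carrier[OF A]] ap_mult[OF A ones_carrier] by simp

lemma ap_X: assumes A: "(A :: rat mat) \<in> carrier_mat n n" and v: "v \<in> carrier_vec n"
  shows "A *\<^sub>v ap A h v = ap A (pCons 0 h) v"
  using ap_pCons[OF A v, of 0 h] ap_carrier[OF A, of h v] A v
  by (auto intro!: eq_vecI)

lemma Q_exists: assumes A: "(A :: rat mat) \<in> carrier_mat n n" and B: "B \<in> carrier_mat n n"
  and SA: "transpose_mat A = A" and SB: "transpose_mat B = B"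
  and cp: "char_poly A = char_poly B" and irr: "irreducible (char_poly A)"
  and walk: "\<And>k. ones n \<bullet> pw A k (ones n) = ones n \<bullet> pw B k (ones n)"
  shows "\<exists>Q. Q \<in> carrier_mat n n \<and> transpose_mat Q * Q = 1\<^sub>m n \<and> Q *\<^sub>v ones n = ones n \<and> A * Q = Q * B"
proof -
  let ?e = "ones n"
  have irrB: "irreducible (char_poly B)" using irr cp by simp
  have n: "0 < n" by (rule irr_n_pos[OF A irr])
  have e0: "?e \<noteq> 0\<^sub>v n" by (rule ones_nz[OF n])
  let ?KA = "krylov A ?e" and ?KB = "krylov B ?e"
  have KA: "?KA \<in> carrier_mat n n" and KB: "?KB \<in> carrier_mat n n" using krylov_carrier A B by auto
  from det_non_zero_imp_unit[OF KB krylov_det[OF B irrB ones_carrier e0], of undefined]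
  obtain Ki where Ki: "Ki \<in> carrier_mat n n" "Ki * ?KB = 1\<^sub>m n"
    unfolding Units_def ring_mat_def by auto
  define Q where "Q = ?KA * Ki"
  have Q: "Q \<in> carrier_mat n n" using KA Ki unfolding Q_def by simp
  have key: "Q *\<^sub>v ap B h ?e = ap A h ?e" for h
  proof -
    define r where "r = h mod char_poly B"
    have dr: "degree r < n"
    proof (cases "r = 0")
      case True then show ?thesis using n by simp
    next
      case False
      have "char_poly B \<noteq> 0" using irrB by auto
      from degree_mod_less'[OF this False[unfolded r_def]] show ?thesis
        unfolding r_def char_poly_deg[OF B] .
    qed
    have "ap B h ?e = ap B r ?e" unfolding r_def by (rule ap_mod[OF B ones_carrier])
    also have "\<dots> = ?KB *\<^sub>v vec n (coeff r)" by (rule krylov_ap[OF B ones_carrier dr])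
    finally have 1: "Q *\<^sub>v ap B h ?e = Q *\<^sub>v (?KB *\<^sub>v vec n (coeff r))" by simp
    have c: "vec n (coeff r) \<in> carrier_vec n" by simp
    have a1: "Q *\<^sub>v (?KB *\<^sub>v vec n (coeff r)) = ?KA *\<^sub>v (Ki *\<^sub>v (?KB *\<^sub>v vec n (coeff r)))"
      unfolding Q_def by (rule assoc_mult_mat_vec[OF KA Ki(1)]) (use KB in simp)
    have a2: "Ki *\<^sub>v (?KB *\<^sub>v vec n (coeff r)) = (Ki * ?KB) *\<^sub>v vec n (coeff r)"
      by (rule assoc_mult_mat_vec[symmetric, OF Ki(1) KB c])
    have "Q *\<^sub>v (?KB *\<^sub>v vec n (coeff r)) = ?KA *\<^sub>v vec n (coeff r)" unfolding a1 a2 Ki(2) by simp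
    also have "\<dots> = ap A r ?e" by (rule krylov_ap[OF A ones_carrier dr, symmetric])
    also have "\<dots> = ap A h ?e" unfolding r_def cp[symmetric] by (rule ap_mod[OF A ones_carrier, symmetric])
    finally show ?thesis using 1 by simp
  qed
  have span: "\<exists>h. v = ap B h ?e" if "v \<in> carrier_vec n" for v
    by (rule krylov_span[OF B irrB ones_carrier e0 that])
  have orth: "transpose_mat Q * Q = 1\<^sub>m n"
  proof (rule orth_by_scalar[OF Q])
    fix u w :: "rat vec" assume u: "u \<in> carrier_vec n" and w: "w \<in> carrier_vec n"
    obtain h where h: "u = ap B h ?e" using span[OF u] by blast
    obtain g where g: "w = ap B g ?e" using span[OF w] by blast
    have "(Q *\<^sub>v u) \<bullet> (Q *\<^sub>v w) = ap A h ?e \<bullet> ap A g ?e" unfolding h g key ..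
    also have "\<dots> = ?e \<bullet> ap A (h * g) ?e" by (rule ap_inner[OF A SA])
    also have "\<dots> = ?e \<bullet> ap B (h * g) ?e" unfolding e_ap[OF A] e_ap[OF B] walk ..
    also have "\<dots> = u \<bullet> w" unfolding h g by (rule ap_inner[OF B SB, symmetric])
    finally show "(Q *\<^sub>v u) \<bullet> (Q *\<^sub>v w) = u \<bullet> w" .
  qed
  have reg: "Q *\<^sub>v ?e = ?e"
    using key[of 1] ap_one[OF A ones_carrier] ap_one[OF B ones_carrier] by simp
  have comm: "A * Q = Q * B"
  proof (rule mat_eq_by_vec)
    show "A * Q \<in> carrier_mat n n" "Q * B \<in> carrier_mat n n" using A B Q by auto
    fix v :: "rat vec" assume v: "v \<in> carrier_vec n"
    obtain h where h: "v = ap B h ?e" using span[OF v] by blast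
    have "(A * Q) *\<^sub>v v = A *\<^sub>v (Q *\<^sub>v v)" using A Q v by simp
    also have "\<dots> = ap A (pCons 0 h) ?e" unfolding h key by (rule ap_X[OF A ones_carrier])
    also have "\<dots> = Q *\<^sub>v (B *\<^sub>v v)" unfolding h ap_X[OF B ones_carrier] key ..
    also have "\<dots> = (Q * B) *\<^sub>v v" using B Q v by simp
    finally show "(A * Q) *\<^sub>v v = (Q * B) *\<^sub>v v" .
  qed
  show ?thesis using Q orth reg comm by blast
qed



lemma vec_diff_zero: assumes "(x :: rat vec) \<in> carrier_vec n" "y \<in> carrier_vec n" "x - y = 0\<^sub>v n"
  shows "x = y"
proof (rule eq_vecI)
  fix i assume "i < dim_vec y"
  hence i: "i < n" using assms by simp
  have "(x - y) $ i = 0\<^sub>v n $ i" using assms(3) by simp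
  hence "x $ i - y $ i = 0" using assms(1,2) i by simp
  thus "x $ i = y $ i" by simp
qed (use assms in simp)

lemma vec_add_zero: assumes "(x :: rat vec) \<in> carrier_vec n" "y \<in> carrier_vec n" "x + y = 0\<^sub>v n"
  shows "x = - y"
proof (rule eq_vecI)
  fix i assume "i < dim_vec (- y)"
  hence i: "i < n" using assms by simp
  have "(x + y) $ i = 0\<^sub>v n $ i" using assms(3) by simp
  hence "x $ i + y $ i = 0" using assms(1,2) i by simp
  thus "x $ i = (- y) $ i" using assms(2) i by (simp add: eq_neg_iff_add_eq_0)
qed (use assms in simp)

lemma rigidity: assumes A: "(A :: rat mat) \<in> carrier_mat n n" and SA: "transpose_mat A = A"
  and irr: "irreducible (char_poly A)"
  and R: "R \<in> carrier_mat n n" and RA: "R * A = A * R" and RR: "transpose_mat R * R = 1\<^sub>m n"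
  shows "R = 1\<^sub>m n \<or> R = - 1\<^sub>m n"
proof -
  let ?e = "ones n"
  let ?\<phi> = "char_poly A"
  have n: "0 < n" by (rule irr_n_pos[OF A irr])
  have e0: "?e \<noteq> 0\<^sub>v n" by (rule ones_nz[OF n])
  have span: "\<exists>h. v = ap A h ?e" if "v \<in> carrier_vec n" for v
    by (rule krylov_span[OF A irr ones_carrier e0 that])
  obtain f where f: "R *\<^sub>v ?e = ap A f ?e" using span[of "R *\<^sub>v ?e"] R by auto
  have Rv: "R *\<^sub>v v = ap A f v" if v: "v \<in> carrier_vec n" for v
  proof -
    obtain h where h: "v = ap A h ?e" using span[OF v] by blast
    have "R *\<^sub>v v = ap A h (R *\<^sub>v ?e)" unfolding h by (rule ap_comm[OF A R RA ones_carrier])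
    also have "\<dots> = ap A (h * f) ?e" unfolding f by (rule ap_mult[OF A ones_carrier, symmetric])
    also have "\<dots> = ap A f v" unfolding h by (simp add: mult.commute ap_mult[OF A ones_carrier])
    finally show ?thesis .
  qed
  have RRe: "R *\<^sub>v (R *\<^sub>v ?e) = ?e"
  proof (rule vec_eq_by_scalar)
    show "R *\<^sub>v (R *\<^sub>v ?e) \<in> carrier_vec n" using R by simp
    fix w :: "rat vec" assume w: "w \<in> carrier_vec n"
    have Re: "R *\<^sub>v ?e \<in> carrier_vec n" using R by simp
    have "(R *\<^sub>v (R *\<^sub>v ?e)) \<bullet> w = ap A f (R *\<^sub>v ?e) \<bullet> w" using Rv[OF Re] by simp
    also have "\<dots> = (R *\<^sub>v ?e) \<bullet> ap A f w" by (rule ap_sym[OF A SA Re w])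
    also have "\<dots> = (R *\<^sub>v ?e) \<bullet> (R *\<^sub>v w)" using Rv[OF w] by simp
    finally have "(R *\<^sub>v (R *\<^sub>v ?e)) \<bullet> w = (R *\<^sub>v ?e) \<bullet> (R *\<^sub>v w)" .
    also have "\<dots> = ?e \<bullet> w" by (rule orth_pres[OF R RR ones_carrier w])
    finally show "(R *\<^sub>v (R *\<^sub>v ?e)) \<bullet> w = ?e \<bullet> w" .
  qed simp
  have "ap A (f * f - 1) ?e = 0\<^sub>v n"
  proof -
    have "ap A (f * f - 1) ?e = ap A (f * f) ?e - ap A 1 ?e" by (rule ap_diff[OF A ones_carrier])
    also have "ap A (f * f) ?e = ?e"
      using RRe Rv[OF ones_carrier] Rv[of "R *\<^sub>v ?e"] R ap_mult[OF A ones_carrier, of f f] ap_carrier[OF A] by simp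
    finally show ?thesis using ap_one[OF A ones_carrier] by auto
  qed
  hence "?\<phi> dvd (f - 1) * (f + 1)" using ann_dvd[OF A irr ones_carrier e0]
    by (simp add: algebra_simps)
  hence "?\<phi> dvd f - 1 \<or> ?\<phi> dvd f + 1"
    by (rule prime_elem_dvd_multD[OF irreducible_imp_prime_elem[OF irr]])
  then show ?thesis
  proof
    assume "?\<phi> dvd f - 1"
    then obtain s where s: "f - 1 = ?\<phi> * s" by (auto simp: dvd_def)
    have "R *\<^sub>v v = 1\<^sub>m n *\<^sub>v v" if v: "v \<in> carrier_vec n" for v
    proof -
      have "ap A (f - 1) v = 0\<^sub>v n" unfolding s mult.commute[of ?\<phi>] ap_mult[OF A v]
        cayley_hamilton_vec[OF A v] ap_vzero[OF A] ..
      hence "ap A f v - ap A 1 v = 0\<^sub>v n" using ap_diff[OF A v] by simp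
      hence "ap A f v = v" using ap_one[OF A v] ap_carrier[OF A, of f v] v
        using vec_diff_zero[OF ap_carrier[OF A] v] by simp
      thus ?thesis using Rv[OF v] v by simp
    qed
    hence "R = 1\<^sub>m n" by (intro mat_eq_by_vec[OF R]) auto
    thus ?thesis by simp
  next
    assume "?\<phi> dvd f + 1"
    then obtain s where s: "f + 1 = ?\<phi> * s" by (auto simp: dvd_def)
    have "R *\<^sub>v v = (- 1\<^sub>m n) *\<^sub>v v" if v: "v \<in> carrier_vec n" for v
    proof -
      have "ap A (f + 1) v = 0\<^sub>v n" unfolding s mult.commute[of ?\<phi>] ap_mult[OF A v]
        cayley_hamilton_vec[OF A v] ap_vzero[OF A] ..
      hence "ap A f v + v = 0\<^sub>v n" using ap_add[OF A v] ap_one[OF A v] by simp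
      hence "ap A f v = - v" using vec_add_zero[OF ap_carrier[OF A] v] by simp
      thus ?thesis using Rv[OF v] v by simp
    qed
    hence "R = - 1\<^sub>m n" by (intro mat_eq_by_vec[OF R]) auto
    thus ?thesis by simp
  qed
qed



lemma det_rank_one: assumes u: "(u :: rat vec) \<in> carrier_vec n" and w: "w \<in> carrier_vec n"
  shows "det (1\<^sub>m n + mat n n (\<lambda>(i,j). u $ i * w $ j)) = 1 + w \<bullet> u"
proof -
  define uc where "uc = mat n 1 (\<lambda>(i,_). u $ i)"
  define wr where "wr = mat 1 n (\<lambda>(_,j). w $ j)"
  define U where "U = mat n n (\<lambda>(i,j). u $ i * w $ j)"
  have uc: "uc \<in> carrier_mat n 1" and wr: "wr \<in> carrier_mat 1 n" and U: "U \<in> carrier_mat n n"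
    by (auto simp: uc_def wr_def U_def)
  define X where "X = four_block_mat (1\<^sub>m n) (- uc) wr (1\<^sub>m 1)"
  have X: "X \<in> carrier_mat (n+1) (n+1)" unfolding X_def using uc wr by auto
  define Y1 where "Y1 = four_block_mat (1\<^sub>m n) uc (0\<^sub>m 1 n) (1\<^sub>m 1)"
  have Y1: "Y1 \<in> carrier_mat (n+1) (n+1)" unfolding Y1_def using uc by auto
  define Y2 where "Y2 = four_block_mat (1\<^sub>m n) (0\<^sub>m n 1) (- wr) (1\<^sub>m 1)"
  have Y2: "Y2 \<in> carrier_mat (n+1) (n+1)" unfolding Y2_def using wr by auto
  have dY1: "det Y1 = 1" unfolding Y1_def
    by (subst det_four_block_mat_lower_left_zero[of _ n _ 1]) (use uc in auto)
  have dY2: "det Y2 = 1" unfolding Y2_def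
    by (subst det_four_block_mat_upper_right_zero[of _ n _ 1]) (use wr in auto)
  have wu: "wr * uc = mat 1 1 (\<lambda>_. w \<bullet> u)"
    by (rule eq_matI) (use u w in \<open>auto simp: wr_def uc_def scalar_prod_def\<close>)
  have "X * Y1 = four_block_mat (1\<^sub>m n * 1\<^sub>m n + (- uc) * 0\<^sub>m 1 n) (1\<^sub>m n * uc + (- uc) * 1\<^sub>m 1)
      (wr * 1\<^sub>m n + 1\<^sub>m 1 * 0\<^sub>m 1 n) (wr * uc + 1\<^sub>m 1 * 1\<^sub>m 1)"
    unfolding X_def Y1_def by (rule mult_four_block_mat) (use uc wr in auto)
  also have "\<dots> = four_block_mat (1\<^sub>m n) (0\<^sub>m n 1) wr (mat 1 1 (\<lambda>_. 1 + w \<bullet> u))"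
    unfolding wu by (intro arg_cong4[where f = four_block_mat] eq_matI) (use uc wr in auto)
  finally have XY1: "X * Y1 = four_block_mat (1\<^sub>m n) (0\<^sub>m n 1) wr (mat 1 1 (\<lambda>_. 1 + w \<bullet> u))" .
  have "det (four_block_mat (1\<^sub>m n) (0\<^sub>m n 1) wr (mat 1 1 (\<lambda>_. 1 + w \<bullet> u))) =
     det (1\<^sub>m n) * det (mat 1 1 (\<lambda>_. 1 + w \<bullet> u))"
    by (rule det_four_block_mat_upper_right_zero[OF _ refl wr]) auto
  also have "\<dots> = 1 + w \<bullet> u" by (subst det_single) auto
  finally have "det (X * Y1) = 1 + w \<bullet> u" unfolding XY1 .
  hence dX1: "det X = 1 + w \<bullet> u" using det_mult[OF X Y1] dY1 by simp
  have uw: "uc * wr = U"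
    by (rule eq_matI) (use u w in \<open>auto simp: wr_def uc_def U_def scalar_prod_def\<close>)
  have "X * Y2 = four_block_mat (1\<^sub>m n * 1\<^sub>m n + (- uc) * (- wr)) (1\<^sub>m n * 0\<^sub>m n 1 + (- uc) * 1\<^sub>m 1)
      (wr * 1\<^sub>m n + 1\<^sub>m 1 * (- wr)) (wr * 0\<^sub>m n 1 + 1\<^sub>m 1 * 1\<^sub>m 1)"
    unfolding X_def Y2_def by (rule mult_four_block_mat) (use uc wr in auto)
  also have "\<dots> = four_block_mat (1\<^sub>m n + U) (- uc) (0\<^sub>m 1 n) (1\<^sub>m 1)"
    by (intro arg_cong4[where f = four_block_mat] eq_matI) (use uc wr U uw[symmetric] in auto)
  finally have XY2: "X * Y2 = four_block_mat (1\<^sub>m n + U) (- uc) (0\<^sub>m 1 n) (1\<^sub>m 1)" .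
  have "det (four_block_mat (1\<^sub>m n + U) (- uc) (0\<^sub>m 1 n) (1\<^sub>m 1)) = det (1\<^sub>m n + U) * det (1\<^sub>m 1 :: rat mat)"
    by (rule det_four_block_mat_lower_left_zero) (use U uc in auto)
  hence "det (X * Y2) = det (1\<^sub>m n + U)" unfolding XY2 by simp
  hence "det X = det (1\<^sub>m n + U)" using det_mult[OF X Y2] dY2 by simp
  thus ?thesis using dX1 unfolding U_def by simp
qed



definition Ymat :: "rat mat \<Rightarrow> rat \<Rightarrow> rat mat" where
  "Ymat A y = y \<cdot>\<^sub>m 1\<^sub>m (dim_row A) - A"

lemma Ymat_carrier: "A \<in> carrier_mat n n \<Longrightarrow> Ymat A y \<in> carrier_mat n n"
  by (auto simp: Ymat_def)

lemma smult_one_mult: "(w :: rat vec) \<in> carrier_vec n \<Longrightarrow> (c \<cdot>\<^sub>m 1\<^sub>m n) *\<^sub>v w = c \<cdot>\<^sub>v w"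
  by (rule eq_vecI) auto

lemma Ymat_mult: assumes A: "A \<in> carrier_mat n n" and w: "w \<in> carrier_vec n"
  shows "Ymat A y *\<^sub>v w = y \<cdot>\<^sub>v w - A *\<^sub>v w"
  unfolding Ymat_def using A w
  by (subst minus_mult_distrib_mat_vec[of _ n n]) (auto simp: smult_one_mult)

lemma det_Ymat: assumes A: "A \<in> carrier_mat n n"
  shows "det (Ymat A y) = poly (char_poly A) y"
proof -
  have "poly (char_poly A) y = det (- char_matrix A y)" by (rule char_poly_matrix[OF A])
  also have "- char_matrix A y = Ymat A y"
    by (rule eq_matI) (use A in \<open>auto simp: Ymat_def char_matrix_def\<close>)
  finally show ?thesis by simp
qed

fun Gv :: "rat mat \<Rightarrow> rat \<Rightarrow> rat vec \<Rightarrow> nat \<Rightarrow> rat vec" where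
  "Gv A y v 0 = 0\<^sub>v (dim_row A)"
| "Gv A y v (Suc i) = y \<cdot>\<^sub>v Gv A y v i + pw A i v"

lemma Gv_carrier: "A \<in> carrier_mat n n \<Longrightarrow> v \<in> carrier_vec n \<Longrightarrow> Gv A y v i \<in> carrier_vec n"
  by (induct i) (auto simp: pw_carrier)

lemma Gv_mult: assumes A: "A \<in> carrier_mat n n" and v: "v \<in> carrier_vec n"
  shows "Ymat A y *\<^sub>v Gv A y v i = y ^ i \<cdot>\<^sub>v v - pw A i v"
proof (induct i)
  case 0
  then show ?case using A v Ymat_carrier[OF A, of y] by (auto intro!: eq_vecI)
next
  case (Suc i)
  have G: "Gv A y v i \<in> carrier_vec n" by (rule Gv_carrier[OF A v])
  have p: "pw A i v \<in> carrier_vec n" by (rule pw_carrier[OF A v])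
  have Y: "Ymat A y \<in> carrier_mat n n" by (rule Ymat_carrier[OF A])
  have "Ymat A y *\<^sub>v Gv A y v (Suc i) = y \<cdot>\<^sub>v (Ymat A y *\<^sub>v Gv A y v i) + Ymat A y *\<^sub>v pw A i v"
    using G p Y by (simp add: mult_add_distrib_mat_vec[OF Y] mult_mat_vec[OF Y])
  also have "\<dots> = y \<cdot>\<^sub>v (y ^ i \<cdot>\<^sub>v v - pw A i v) + (y \<cdot>\<^sub>v pw A i v - A *\<^sub>v pw A i v)"
    unfolding Suc Ymat_mult[OF A p] ..
  also have "\<dots> = y ^ Suc i \<cdot>\<^sub>v v - pw A (Suc i) v"
    by (rule eq_vecI) (use A v p in \<open>auto simp: algebra_simps\<close>)
  finally show ?case .
qed

fun Zv :: "rat mat \<Rightarrow> rat \<Rightarrow> rat vec \<Rightarrow> nat \<Rightarrow> rat vec" where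
  "Zv A y v 0 = 0\<^sub>v (dim_row A)"
| "Zv A y v (Suc m) = Zv A y v m + coeff (char_poly A) m \<cdot>\<^sub>v Gv A y v m"

lemma Zv_carrier: "A \<in> carrier_mat n n \<Longrightarrow> v \<in> carrier_vec n \<Longrightarrow> Zv A y v m \<in> carrier_vec n"
  by (induct m) (auto simp: Gv_carrier)

lemma Zv_mult: assumes A: "A \<in> carrier_mat n n" and v: "v \<in> carrier_vec n"
  shows "Ymat A y *\<^sub>v Zv A y v m = vec n (\<lambda>r. (\<Sum>i<m. coeff (char_poly A) i * y ^ i) * v $ r
     - (\<Sum>i<m. coeff (char_poly A) i * (pw A i v $ r)))"
proof (induct m)
  case 0
  then show ?case using A v Ymat_carrier[OF A, of y] by (auto intro!: eq_vecI)
next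
  case (Suc m)
  have Z: "Zv A y v m \<in> carrier_vec n" by (rule Zv_carrier[OF A v])
  have G: "Gv A y v m \<in> carrier_vec n" by (rule Gv_carrier[OF A v])
  have p: "pw A m v \<in> carrier_vec n" by (rule pw_carrier[OF A v])
  have Y: "Ymat A y \<in> carrier_mat n n" by (rule Ymat_carrier[OF A])
  have "Ymat A y *\<^sub>v Zv A y v (Suc m) = Ymat A y *\<^sub>v Zv A y v m + coeff (char_poly A) m \<cdot>\<^sub>v (Ymat A y *\<^sub>v Gv A y v m)"
    using G Z Y by (simp add: mult_add_distrib_mat_vec[OF Y] mult_mat_vec[OF Y])
  also have "\<dots> = vec n (\<lambda>r. (\<Sum>i<Suc m. coeff (char_poly A) i * y ^ i) * v $ r
     - (\<Sum>i<Suc m. coeff (char_poly A) i * (pw A i v $ r)))"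
    unfolding Suc Gv_mult[OF A v]
    by (rule eq_vecI) (use A v p in \<open>auto simp: algebra_simps\<close>)
  finally show ?case .
qed

lemma Zv_final: assumes A: "A \<in> carrier_mat n n" and v: "v \<in> carrier_vec n"
  shows "Ymat A y *\<^sub>v Zv A y v (Suc n) = poly (char_poly A) y \<cdot>\<^sub>v v"
proof -
  have d: "degree (char_poly A) < Suc n" using char_poly_deg[OF A] by simp
  have p: "poly (char_poly A) y = (\<Sum>i<Suc n. coeff (char_poly A) i * y ^ i)"
    unfolding poly_altdef char_poly_deg[OF A] lessThan_Suc_atMost ..
  show ?thesis unfolding Zv_mult[OF A v]
  proof (rule eq_vecI)
    fix r assume "r < dim_vec (poly (char_poly A) y \<cdot>\<^sub>v v)"
    hence r: "r < n" using v by simp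
    have "(\<Sum>i<Suc n. coeff (char_poly A) i * (pw A i v $ r)) = ap A (char_poly A) v $ r"
      by (rule ap_index[OF A r d, symmetric])
    also have "\<dots> = 0" using cayley_hamilton_vec[OF A v] r by simp
    finally show "vec n (\<lambda>r. (\<Sum>i<Suc n. coeff (char_poly A) i * y ^ i) * v $ r
     - (\<Sum>i<Suc n. coeff (char_poly A) i * (pw A i v $ r))) $ r = (poly (char_poly A) y \<cdot>\<^sub>v v) $ r"
      using r v p by simp
  qed (use v in simp)
qed

fun Hs :: "(nat \<Rightarrow> rat) \<Rightarrow> nat \<Rightarrow> rat poly" where
  "Hs N 0 = 0"
| "Hs N (Suc i) = pCons (N i) (Hs N i)"

fun Ts :: "rat poly \<Rightarrow> (nat \<Rightarrow> rat) \<Rightarrow> nat \<Rightarrow> rat poly" where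
  "Ts c N 0 = 0"
| "Ts c N (Suc m) = Ts c N m + Polynomial.smult (coeff c m) (Hs N m)"

lemma Gv_scalar: assumes A: "A \<in> carrier_mat n n" and v: "v \<in> carrier_vec n" and u: "u \<in> carrier_vec n"
  shows "u \<bullet> Gv A y v i = poly (Hs (\<lambda>k. u \<bullet> pw A k v) i) y"
proof (induct i)
  case 0
  then show ?case using A u by simp
next
  case (Suc i)
  have G: "Gv A y v i \<in> carrier_vec n" by (rule Gv_carrier[OF A v])
  have p: "pw A i v \<in> carrier_vec n" by (rule pw_carrier[OF A v])
  show ?case using Suc G p u
    by (simp add: scalar_prod_add_distrib[of _ n] algebra_simps)
qed

lemma Zv_scalar: assumes A: "A \<in> carrier_mat n n" and v: "v \<in> carrier_vec n" and u: "u \<in> carrier_vec n"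
  shows "u \<bullet> Zv A y v m = poly (Ts (char_poly A) (\<lambda>k. u \<bullet> pw A k v) m) y"
proof (induct m)
  case 0
  then show ?case using A u by simp
next
  case (Suc m)
  have G: "Gv A y v m \<in> carrier_vec n" by (rule Gv_carrier[OF A v])
  have Z: "Zv A y v m \<in> carrier_vec n" by (rule Zv_carrier[OF A v])
  show ?case using Suc G Z u Gv_scalar[OF A v u]
    by (simp add: scalar_prod_add_distrib[of _ n] algebra_simps)
qed

lemma coeff_Hs: "coeff (Hs N i) j = (if j < i then N (i - 1 - j) else 0)"
  by (induct i arbitrary: j) (auto simp: coeff_pCons split: nat.splits)

lemma coeff_Ts: "coeff (Ts c N m) j = (\<Sum>i<m. coeff c i * (if j < i then N (i - 1 - j) else 0))"
  by (induct m) (auto simp: coeff_Hs)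



lemma det_YJ: assumes A: "(A :: rat mat) \<in> carrier_mat n n" and c0: "poly (char_poly A) y \<noteq> 0"
  shows "det (Ymat A y + J\<^sub>m n) = poly (char_poly A) y + ones n \<bullet> Zv A y (ones n) (Suc n)"
proof -
  let ?c = "poly (char_poly A) y"
  let ?e = "ones n"
  define Y where "Y = Ymat A y"
  define Z where "Z = Zv A y ?e (Suc n)"
  have Y: "Y \<in> carrier_mat n n" unfolding Y_def by (rule Ymat_carrier[OF A])
  have Z: "Z \<in> carrier_vec n" unfolding Z_def by (rule Zv_carrier[OF A ones_carrier])
  define z where "z = (1 / ?c) \<cdot>\<^sub>v Z"
  have z: "z \<in> carrier_vec n" using Z unfolding z_def by simp
  have Yz: "Y *\<^sub>v z = ?e"
    unfolding z_def mult_mat_vec[OF Y Z] using Zv_final[OF A ones_carrier, of y] c0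
    unfolding Y_def Z_def by (auto intro!: eq_vecI)
  define Um where "Um = mat n n (\<lambda>(i,j). z $ i * ?e $ j)"
  have Um: "Um \<in> carrier_mat n n" unfolding Um_def by simp
  have "Y * (1\<^sub>m n + Um) = Y * 1\<^sub>m n + Y * Um" by (rule mult_add_distrib_mat[OF Y]) (use Um in auto)
  also have "\<dots> = Y + J\<^sub>m n"
  proof (rule eq_matI)
    fix i j assume "i < dim_row (Y + J\<^sub>m n)" "j < dim_col (Y + J\<^sub>m n)"
    hence i: "i < n" and j: "j < n" using Y by (auto simp: all_ones_mat_def)
    have col: "col Um j = z" by (rule eq_vecI) (use z j in \<open>auto simp: Um_def ones_def\<close>)
    have "(Y * Um) $$ (i,j) = row Y i \<bullet> col Um j" using Y Um i j by simp
    also have "\<dots> = (Y *\<^sub>v z) $ i" unfolding col using Y i by simp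
    also have "\<dots> = 1" unfolding Yz using i by (simp add: ones_def)
    finally show "(Y * 1\<^sub>m n + Y * Um) $$ (i,j) = (Y + J\<^sub>m n) $$ (i,j)"
      using Y Um i j by (simp add: all_ones_mat_def)
  qed (use Y Um in \<open>auto simp: all_ones_mat_def\<close>)
  finally have eq: "Y + J\<^sub>m n = Y * (1\<^sub>m n + Um)" ..
  have "det (Y + J\<^sub>m n) = det Y * det (1\<^sub>m n + Um)" unfolding eq
    by (rule det_mult[OF Y]) (use Um in auto)
  also have "det (1\<^sub>m n + Um) = 1 + ?e \<bullet> z" unfolding Um_def by (rule det_rank_one[OF z ones_carrier])
  also have "?e \<bullet> z = (1 / ?c) * (?e \<bullet> Z)" unfolding z_def using Z by simp
  also have "det Y = ?c" unfolding Y_def by (rule det_Ymat[OF A])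
  finally show ?thesis using c0 unfolding Y_def Z_def by (simp add: field_simps)
qed

lemma pw_add: "pw A k (pw A j v) = pw A (k + j) v"
  by (induct k) auto

lemma u_ap: assumes A: "(A :: rat mat) \<in> carrier_mat n n" and u: "u \<in> carrier_vec n" and v: "v \<in> carrier_vec n"
  shows "u \<bullet> ap A f v = (\<Sum>k\<le>degree f. coeff f k * (u \<bullet> pw A k v))"
proof -
  have pc: "\<And>k. pw A k v \<in> carrier_vec n" using pw_carrier[OF A v] .
  have "u \<bullet> ap A f v = (\<Sum>i<n. u $ i * (\<Sum>k\<le>degree f. coeff f k * (pw A k v $ i)))"
    using A by (auto simp: scalar_prod_def ap_def lessThan_atLeast0)
  also have "\<dots> = (\<Sum>i<n. \<Sum>k\<le>degree f. u $ i * (coeff f k * (pw A k v $ i)))" by (simp add: sum_distrib_left)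
  also have "\<dots> = (\<Sum>k\<le>degree f. \<Sum>i<n. u $ i * (coeff f k * (pw A k v $ i)))" by (rule sum.swap)
  also have "\<dots> = (\<Sum>k\<le>degree f. coeff f k * (u \<bullet> pw A k v))"
  proof (rule sum.cong[OF refl])
    fix k
    have d: "dim_vec (pw A k v) = n" using pc[of k] by simp
    show "(\<Sum>i<n. u $ i * (coeff f k * (pw A k v $ i))) = coeff f k * (u \<bullet> pw A k v)"
      unfolding scalar_prod_def d lessThan_atLeast0 by (simp add: sum_distrib_left mult_ac)
  qed
  finally show ?thesis .
qed

lemma walk_rec: assumes A: "(A :: rat mat) \<in> carrier_mat n n"
  shows "(\<Sum>k<Suc n. coeff (char_poly A) k * (ones n \<bullet> pw A (k + j) (ones n))) = 0"
proof -
  have v: "pw A j (ones n) \<in> carrier_vec n" by (rule pw_carrier[OF A ones_carrier])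
  have "0 = ones n \<bullet> ap A (char_poly A) (pw A j (ones n))"
    unfolding cayley_hamilton_vec[OF A v] by simp
  also have "\<dots> = (\<Sum>k\<le>degree (char_poly A). coeff (char_poly A) k * (ones n \<bullet> pw A k (pw A j (ones n))))"
    by (rule u_ap[OF A ones_carrier v])
  finally show ?thesis unfolding pw_add char_poly_deg[OF A] lessThan_Suc_atMost by simp
qed

lemma walk_from_det: assumes A: "(A :: rat mat) \<in> carrier_mat n n" and B: "B \<in> carrier_mat n n"
  and cp: "char_poly A = char_poly B"
  and dt: "\<And>y. det (Ymat A y + J\<^sub>m n) = det (Ymat B y + J\<^sub>m n)"
  shows "ones n \<bullet> pw A k (ones n) = ones n \<bullet> pw B k (ones n)"
proof -
  let ?e = "ones n"
  let ?\<phi> = "char_poly A"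
  define NA where "NA k = ?e \<bullet> pw A k ?e" for k
  define NB where "NB k = ?e \<bullet> pw B k ?e" for k
  define TA where "TA = Ts ?\<phi> NA (Suc n)"
  define TB where "TB = Ts ?\<phi> NB (Suc n)"
  have \<phi>0: "?\<phi> \<noteq> 0" using char_poly_lead[OF A] by auto
  have pt: "poly TA y = poly TB y" if y: "poly ?\<phi> y \<noteq> 0" for y
  proof -
    have yB: "poly (char_poly B) y \<noteq> 0" using y cp by simp
    have "poly ?\<phi> y + poly TA y = det (Ymat A y + J\<^sub>m n)"
      unfolding det_YJ[OF A y] Zv_scalar[OF A ones_carrier ones_carrier] TA_def NA_def ..
    also have "\<dots> = det (Ymat B y + J\<^sub>m n)" by (rule dt)
    also have "\<dots> = poly ?\<phi> y + poly TB y"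
      unfolding det_YJ[OF B yB] Zv_scalar[OF B ones_carrier ones_carrier] TB_def NB_def cp ..
    finally show ?thesis by simp
  qed
  have T: "TA = TB"
  proof (rule ccontr)
    assume "TA \<noteq> TB"
    hence d0: "TA - TB \<noteq> 0" by simp
    have "UNIV \<subseteq> {y. poly (TA - TB) y = 0} \<union> {y. poly ?\<phi> y = 0}" using pt by auto
    moreover have "finite ({y. poly (TA - TB) y = 0} \<union> {y. poly ?\<phi> y = 0})"
      using poly_roots_finite[OF d0] poly_roots_finite[OF \<phi>0] by simp
    ultimately have "finite (UNIV :: rat set)" by (rule finite_subset)
    thus False using infinite_UNIV_char_0 by auto
  qed
  have lead: "coeff ?\<phi> n = 1" by (rule char_poly_lead[OF A])
  have "NA m = NB m" for m
  proof (induct m rule: less_induct)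
    case (less m)
    show ?case
    proof (cases "m < n")
      case True
      let ?j = "n - 1 - m"
      let ?f = "\<lambda>N i. coeff ?\<phi> i * (if ?j < i then N (i - 1 - ?j) else 0)"
      have "coeff TA ?j = coeff TB ?j" unfolding T ..
      hence "(\<Sum>i<Suc n. ?f NA i) = (\<Sum>i<Suc n. ?f NB i)"
        unfolding TA_def TB_def coeff_Ts .
      hence "?f NA n + (\<Sum>i<n. ?f NA i) = ?f NB n + (\<Sum>i<n. ?f NB i)" by simp
      moreover have "(\<Sum>i<n. ?f NA i) = (\<Sum>i<n. ?f NB i)"
      proof (rule sum.cong[OF refl])
        fix i assume "i \<in> {..<n}"
        hence "i < n" by simp
        thus "?f NA i = ?f NB i" using less[of "i - 1 - ?j"] True by auto
      qed
      moreover have "n - 1 - ?j = m" using True by simp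
      ultimately show ?thesis using True lead by simp
    next
      case False
      define j where "j = m - n"
      have mj: "m = n + j" using False unfolding j_def by simp
      have rA: "(\<Sum>k<Suc n. coeff ?\<phi> k * NA (k + j)) = 0" using walk_rec[OF A, of j] unfolding NA_def .
      have rB: "(\<Sum>k<Suc n. coeff ?\<phi> k * NB (k + j)) = 0" using walk_rec[OF B, of j] unfolding NB_def cp .
      have s: "(\<Sum>k<n. coeff ?\<phi> k * NA (k + j)) = (\<Sum>k<n. coeff ?\<phi> k * NB (k + j))"
      proof (rule sum.cong[OF refl])
        fix k assume "k \<in> {..<n}"
        thus "coeff ?\<phi> k * NA (k + j) = coeff ?\<phi> k * NB (k + j)" using less[of "k + j"] mj by auto
      qed
      from rA rB s lead show ?thesis unfolding mj by (simp add: add.commute)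
    qed
  qed
  thus ?thesis unfolding NA_def NB_def .
qed



lemma sum_split_add: fixes p q :: nat and f :: "nat \<Rightarrow> 'a :: comm_monoid_add"
  shows "(\<Sum>k<p+q. f k) = (\<Sum>k<p. f k) + (\<Sum>k<q. f (p + k))"
  by (induct q) (auto simp: add.assoc)

lemma QtQ_entry: assumes Q: "(Q :: rat mat) \<in> carrier_mat n n" and i: "i < n" and j: "j < n"
  shows "(transpose_mat Q * Q) $$ (i,j) = (\<Sum>k<n. Q $$ (k,i) * Q $$ (k,j))"
  using Q i j by (auto simp: scalar_prod_def lessThan_atLeast0)

lemma Qv_entry: assumes Q: "(Q :: rat mat) \<in> carrier_mat n n" and i: "i < n"
  shows "(Q *\<^sub>v ones n) $ i = (\<Sum>k<n. Q $$ (i,k))"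
  using Q i by (auto simp: scalar_prod_def lessThan_atLeast0 ones_def)

lemma block_diag: assumes Q: "(Q :: rat mat) \<in> carrier_mat (p+q) (p+q)"
  and orth: "transpose_mat Q * Q = 1\<^sub>m (p+q)" and reg: "Q *\<^sub>v ones (p+q) = ones (p+q)"
  and z: "\<And>i j. i < p+q \<Longrightarrow> j < p+q \<Longrightarrow> (i < p) \<noteq> (j < p) \<Longrightarrow> Q $$ (i,j) = 0"
  shows "\<exists>Q1 Q2. orthogonal_mat Q1 \<and> regular_mat Q1 \<and> orthogonal_mat Q2 \<and> regular_mat Q2 \<and>
     Q1 \<in> carrier_mat p p \<and> Q2 \<in> carrier_mat q q \<and> Q = four_block_mat Q1 (0\<^sub>m p q) (0\<^sub>m q p) Q2"
proof -
  define Q1 where "Q1 = mat p p (\<lambda>(i,j). Q $$ (i,j))"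
  define Q2 where "Q2 = mat q q (\<lambda>(i,j). Q $$ (p + i, p + j))"
  have Q1: "Q1 \<in> carrier_mat p p" and Q2: "Q2 \<in> carrier_mat q q" by (auto simp: Q1_def Q2_def)
  have QQ: "\<And>i j. i < p+q \<Longrightarrow> j < p+q \<Longrightarrow> (\<Sum>k<p+q. Q $$ (k,i) * Q $$ (k,j)) = (if i = j then 1 else 0)"
    using QtQ_entry[OF Q] orth by (metis index_one_mat(1))
  have QE: "\<And>i. i < p+q \<Longrightarrow> (\<Sum>k<p+q. Q $$ (i,k)) = 1"
    using Qv_entry[OF Q] reg by (metis index_vec ones_def)
  have "orthogonal_mat Q1"
  proof -
    have "transpose_mat Q1 * Q1 = 1\<^sub>m p"
    proof (rule eq_matI)
      fix i j assume "i < dim_row (1\<^sub>m p :: rat mat)" "j < dim_col (1\<^sub>m p :: rat mat)"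
      hence i: "i < p" and j: "j < p" by auto
      have "(transpose_mat Q1 * Q1) $$ (i,j) = (\<Sum>k<p. Q $$ (k,i) * Q $$ (k,j))"
        using QtQ_entry[OF Q1 i j] i j by (simp add: Q1_def)
      also have "\<dots> = (\<Sum>k<p+q. Q $$ (k,i) * Q $$ (k,j))"
        unfolding sum_split_add using z i j by simp
      also have "\<dots> = (1\<^sub>m p :: rat mat) $$ (i,j)" using QQ[of i j] i j by simp
      finally show "(transpose_mat Q1 * Q1) $$ (i,j) = (1\<^sub>m p :: rat mat) $$ (i,j)" .
    qed (use Q1 in auto)
    thus ?thesis using Q1 unfolding orthogonal_mat_def by simp
  qed
  moreover have "regular_mat Q1"
  proof -
    have "Q1 *\<^sub>v ones p = ones p"
    proof (rule eq_vecI)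
      fix i assume "i < dim_vec (ones p)"
      hence i: "i < p" by (simp add: ones_def)
      have "(Q1 *\<^sub>v ones p) $ i = (\<Sum>k<p. Q $$ (i,k))" using Qv_entry[OF Q1 i] i by (simp add: Q1_def)
      also have "\<dots> = (\<Sum>k<p+q. Q $$ (i,k))" unfolding sum_split_add using z i by simp
      also have "\<dots> = ones p $ i" using QE[of i] i by (simp add: ones_def)
      finally show "(Q1 *\<^sub>v ones p) $ i = ones p $ i" .
    qed (use Q1 in \<open>simp add: ones_def\<close>)
    thus ?thesis using Q1 unfolding regular_mat_def ones_def by simp
  qed
  moreover have "orthogonal_mat Q2"
  proof -
    have "transpose_mat Q2 * Q2 = 1\<^sub>m q"
    proof (rule eq_matI)
      fix i j assume "i < dim_row (1\<^sub>m q :: rat mat)" "j < dim_col (1\<^sub>m q :: rat mat)"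
      hence i: "i < q" and j: "j < q" by auto
      have "(transpose_mat Q2 * Q2) $$ (i,j) = (\<Sum>k<q. Q $$ (p + k, p + i) * Q $$ (p + k, p + j))"
        using QtQ_entry[OF Q2 i j] i j by (simp add: Q2_def)
      also have "\<dots> = (\<Sum>k<p+q. Q $$ (k, p + i) * Q $$ (k, p + j))"
        unfolding sum_split_add using z i j by simp
      also have "\<dots> = (1\<^sub>m q :: rat mat) $$ (i,j)" using QQ[of "p + i" "p + j"] i j by simp
      finally show "(transpose_mat Q2 * Q2) $$ (i,j) = (1\<^sub>m q :: rat mat) $$ (i,j)" .
    qed (use Q2 in auto)
    thus ?thesis using Q2 unfolding orthogonal_mat_def by simp
  qed
  moreover have "regular_mat Q2"
  proof -
    have "Q2 *\<^sub>v ones q = ones q"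
    proof (rule eq_vecI)
      fix i assume "i < dim_vec (ones q)"
      hence i: "i < q" by (simp add: ones_def)
      have "(Q2 *\<^sub>v ones q) $ i = (\<Sum>k<q. Q $$ (p + i, p + k))" using Qv_entry[OF Q2 i] i by (simp add: Q2_def)
      also have "\<dots> = (\<Sum>k<p+q. Q $$ (p + i, k))" unfolding sum_split_add using z i by simp
      also have "\<dots> = ones q $ i" using QE[of "p + i"] i by (simp add: ones_def)
      finally show "(Q2 *\<^sub>v ones q) $ i = ones q $ i" .
    qed (use Q2 in \<open>simp add: ones_def\<close>)
    thus ?thesis using Q2 unfolding regular_mat_def ones_def by simp
  qed
  moreover have "Q = four_block_mat Q1 (0\<^sub>m p q) (0\<^sub>m q p) Q2"
    by (rule eq_matI) (use Q Q1 Q2 z in \<open>auto simp: Q1_def Q2_def\<close>)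
  ultimately show ?thesis using Q1 Q2 by blast
qed

lemma block_anti: assumes Q: "(Q :: rat mat) \<in> carrier_mat (p+q) (p+q)"
  and orth: "transpose_mat Q * Q = 1\<^sub>m (p+q)" and reg: "Q *\<^sub>v ones (p+q) = ones (p+q)"
  and z: "\<And>i j. i < p+q \<Longrightarrow> j < p+q \<Longrightarrow> (i < p) = (j < q) \<Longrightarrow> Q $$ (i,j) = 0"
  shows "\<exists>Q1 Q2. orthogonal_mat Q1 \<and> regular_mat Q1 \<and> orthogonal_mat Q2 \<and> regular_mat Q2 \<and>
     Q1 \<in> carrier_mat p p \<and> Q2 \<in> carrier_mat q q \<and> Q = four_block_mat (0\<^sub>m p q) Q1 Q2 (0\<^sub>m q p)"
proof -
  define Q1 where "Q1 = mat p p (\<lambda>(i,j). Q $$ (i, q + j))"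
  define Q2 where "Q2 = mat q q (\<lambda>(i,j). Q $$ (p + i, j))"
  have Q1: "Q1 \<in> carrier_mat p p" and Q2: "Q2 \<in> carrier_mat q q" by (auto simp: Q1_def Q2_def)
  have QQ: "\<And>i j. i < p+q \<Longrightarrow> j < p+q \<Longrightarrow> (\<Sum>k<p+q. Q $$ (k,i) * Q $$ (k,j)) = (if i = j then 1 else 0)"
    using QtQ_entry[OF Q] orth by (metis index_one_mat(1))
  have QE: "\<And>i. i < p+q \<Longrightarrow> (\<Sum>k<p+q. Q $$ (i,k)) = 1"
    using Qv_entry[OF Q] reg by (metis index_vec ones_def)
  have sw: "(\<Sum>k<p+q. f k) = (\<Sum>k<q. f k) + (\<Sum>k<p. f (q + k))" for f :: "nat \<Rightarrow> rat"
    using sum_split_add[of f q p] by (simp add: add.commute)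
  have "orthogonal_mat Q1"
  proof -
    have "transpose_mat Q1 * Q1 = 1\<^sub>m p"
    proof (rule eq_matI)
      fix i j assume "i < dim_row (1\<^sub>m p :: rat mat)" "j < dim_col (1\<^sub>m p :: rat mat)"
      hence i: "i < p" and j: "j < p" by auto
      have "(transpose_mat Q1 * Q1) $$ (i,j) = (\<Sum>k<p. Q $$ (k, q + i) * Q $$ (k, q + j))"
        using QtQ_entry[OF Q1 i j] i j by (simp add: Q1_def)
      also have "\<dots> = (\<Sum>k<p+q. Q $$ (k, q + i) * Q $$ (k, q + j))"
        unfolding sum_split_add using z i j by simp
      also have "\<dots> = (1\<^sub>m p :: rat mat) $$ (i,j)" using QQ[of "q + i" "q + j"] i j by simp
      finally show "(transpose_mat Q1 * Q1) $$ (i,j) = (1\<^sub>m p :: rat mat) $$ (i,j)" .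
    qed (use Q1 in auto)
    thus ?thesis using Q1 unfolding orthogonal_mat_def by simp
  qed
  moreover have "regular_mat Q1"
  proof -
    have "Q1 *\<^sub>v ones p = ones p"
    proof (rule eq_vecI)
      fix i assume "i < dim_vec (ones p)"
      hence i: "i < p" by (simp add: ones_def)
      have "(Q1 *\<^sub>v ones p) $ i = (\<Sum>k<p. Q $$ (i, q + k))" using Qv_entry[OF Q1 i] i by (simp add: Q1_def)
      also have "\<dots> = (\<Sum>k<p+q. Q $$ (i,k))" unfolding sw using z i by simp
      also have "\<dots> = ones p $ i" using QE[of i] i by (simp add: ones_def)
      finally show "(Q1 *\<^sub>v ones p) $ i = ones p $ i" .
    qed (use Q1 in \<open>simp add: ones_def\<close>)
    thus ?thesis using Q1 unfolding regular_mat_def ones_def by simp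
  qed
  moreover have "orthogonal_mat Q2"
  proof -
    have "transpose_mat Q2 * Q2 = 1\<^sub>m q"
    proof (rule eq_matI)
      fix i j assume "i < dim_row (1\<^sub>m q :: rat mat)" "j < dim_col (1\<^sub>m q :: rat mat)"
      hence i: "i < q" and j: "j < q" by auto
      have "(transpose_mat Q2 * Q2) $$ (i,j) = (\<Sum>k<q. Q $$ (p + k, i) * Q $$ (p + k, j))"
        using QtQ_entry[OF Q2 i j] i j by (simp add: Q2_def)
      also have "\<dots> = (\<Sum>k<p+q. Q $$ (k, i) * Q $$ (k, j))"
        unfolding sum_split_add using z i j by simp
      also have "\<dots> = (1\<^sub>m q :: rat mat) $$ (i,j)" using QQ[of i j] i j by simp
      finally show "(transpose_mat Q2 * Q2) $$ (i,j) = (1\<^sub>m q :: rat mat) $$ (i,j)" .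
    qed (use Q2 in auto)
    thus ?thesis using Q2 unfolding orthogonal_mat_def by simp
  qed
  moreover have "regular_mat Q2"
  proof -
    have "Q2 *\<^sub>v ones q = ones q"
    proof (rule eq_vecI)
      fix i assume "i < dim_vec (ones q)"
      hence i: "i < q" by (simp add: ones_def)
      have "(Q2 *\<^sub>v ones q) $ i = (\<Sum>k<q. Q $$ (p + i, k))" using Qv_entry[OF Q2 i] i by (simp add: Q2_def)
      also have "\<dots> = (\<Sum>k<p+q. Q $$ (p + i, k))" unfolding sw using z i by simp
      also have "\<dots> = ones q $ i" using QE[of "p + i"] i by (simp add: ones_def)
      finally show "(Q2 *\<^sub>v ones q) $ i = ones q $ i" .
    qed (use Q2 in \<open>simp add: ones_def\<close>)
    thus ?thesis using Q2 unfolding regular_mat_def ones_def by simp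
  qed
  moreover have "Q = four_block_mat (0\<^sub>m p q) Q1 Q2 (0\<^sub>m q p)"
    by (rule eq_matI) (use Q Q1 Q2 z in \<open>auto simp: Q1_def Q2_def\<close>)
  ultimately show ?thesis using Q1 Q2 by blast
qed



lemma mat_vec_uminus: assumes M: "(M :: rat mat) \<in> carrier_mat n n" and x: "x \<in> carrier_vec n"
  shows "M *\<^sub>v (- x) = - (M *\<^sub>v x)"
  by (rule eq_vecI) (use M x in \<open>auto simp: scalar_prod_def sum_negf\<close>)

lemma uminus_mat_vec: assumes M: "(M :: rat mat) \<in> carrier_mat n n" and x: "x \<in> carrier_vec n"
  shows "(- M) *\<^sub>v x = - (M *\<^sub>v x)"
  by (rule eq_vecI) (use M x in \<open>auto simp: scalar_prod_def sum_negf\<close>)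

definition sgnd :: "nat \<Rightarrow> nat \<Rightarrow> rat" where "sgnd p i = (if i < p then 1 else -1)"

definition Dm :: "nat \<Rightarrow> nat \<Rightarrow> rat mat" where
  "Dm p n = mat n n (\<lambda>(i,j). if i = j then sgnd p i else 0)"

lemma Dm_carrier[simp]: "Dm p n \<in> carrier_mat n n" by (simp add: Dm_def)

lemma Dm_dim[simp]: "dim_row (Dm p n) = n" "dim_col (Dm p n) = n" by (simp_all add: Dm_def)

lemma Dm_vec: assumes w: "w \<in> carrier_vec n"
  shows "Dm p n *\<^sub>v w = vec n (\<lambda>i. sgnd p i * w $ i)"
proof (rule eq_vecI)
  fix i assume "i < dim_vec (vec n (\<lambda>i. sgnd p i * w $ i))"
  hence i: "i < n" by simp
  have "(Dm p n *\<^sub>v w) $ i = (\<Sum>j<n. (if i = j then sgnd p i else 0) * w $ j)"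
    using w i by (auto simp: Dm_def scalar_prod_def lessThan_atLeast0 intro!: sum.cong)
  also have "\<dots> = (\<Sum>j<n. if j = i then sgnd p i * w $ j else 0)" by (rule sum.cong) auto
  also have "\<dots> = sgnd p i * w $ i" using i by simp
  finally show "(Dm p n *\<^sub>v w) $ i = vec n (\<lambda>i. sgnd p i * w $ i) $ i" using i by simp
qed (use w in simp)

lemma sgnd_sq: "sgnd p i * sgnd p i = 1" by (simp add: sgnd_def)

lemma Dm_pres: assumes u: "u \<in> carrier_vec n" and w: "w \<in> carrier_vec n"
  shows "(Dm p n *\<^sub>v u) \<bullet> (Dm p n *\<^sub>v w) = u \<bullet> w"
proof -
  have "(Dm p n *\<^sub>v u) \<bullet> (Dm p n *\<^sub>v w) = (\<Sum>i<n. (sgnd p i * u $ i) * (sgnd p i * w $ i))"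
    unfolding Dm_vec[OF u] Dm_vec[OF w] by (simp add: scalar_prod_def lessThan_atLeast0)
  also have "\<dots> = (\<Sum>i<n. u $ i * w $ i)"
    by (rule sum.cong[OF refl]) (simp add: sgnd_def)
  also have "\<dots> = u \<bullet> w" using w by (simp add: scalar_prod_def lessThan_atLeast0)
  finally show ?thesis .
qed

lemma Dm_orth: "transpose_mat (Dm p n) * Dm p n = 1\<^sub>m n"
  by (rule orth_by_scalar[OF Dm_carrier Dm_pres])

lemma sba_index: assumes M: "M \<in> carrier_mat p q" and i: "i < p + q" and j: "j < p + q"
  shows "signed_bip_adj p q M $$ (i,j) = (if i < p then (if j < p then 0 else M $$ (i, j - p))
      else (if j < p then M $$ (j, i - p) else 0))"
  unfolding signed_bip_adj_def using M i j by (auto simp: index_mat_four_block)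

lemma sba_carrier: "M \<in> carrier_mat p q \<Longrightarrow> signed_bip_adj p q M \<in> carrier_mat (p+q) (p+q)"
  unfolding signed_bip_adj_def by auto

lemma sba_sym: assumes M: "M \<in> carrier_mat p q"
  shows "transpose_mat (map_mat rat_of_int (signed_bip_adj p q M)) = map_mat rat_of_int (signed_bip_adj p q M)"
  by (rule eq_matI) (use M sba_carrier[OF M] in \<open>auto simp: sba_index[OF M]\<close>)

lemma sba_anti: assumes M: "M \<in> carrier_mat p q" and w: "w \<in> carrier_vec (p+q)"
  shows "Dm p (p+q) *\<^sub>v (map_mat rat_of_int (signed_bip_adj p q M) *\<^sub>v w) =
    - (map_mat rat_of_int (signed_bip_adj p q M) *\<^sub>v (Dm p (p+q) *\<^sub>v w))"
proof -
  let ?A = "map_mat rat_of_int (signed_bip_adj p q M)"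
  have A: "?A \<in> carrier_mat (p+q) (p+q)" using sba_carrier[OF M] by simp
  have Aw: "?A *\<^sub>v w \<in> carrier_vec (p+q)" using A w by simp
  have Dw: "Dm p (p+q) *\<^sub>v w \<in> carrier_vec (p+q)" by (rule mult_mat_vec_carrier[OF Dm_carrier w])
  show ?thesis
  proof (rule eq_vecI)
    fix i assume "i < dim_vec (- (?A *\<^sub>v (Dm p (p+q) *\<^sub>v w)))"
    hence i: "i < p + q" using A by simp
    have "(Dm p (p+q) *\<^sub>v (?A *\<^sub>v w)) $ i = sgnd p i * (\<Sum>j<p+q. ?A $$ (i,j) * w $ j)"
      unfolding Dm_vec[OF Aw] using i A w by (simp add: scalar_prod_def lessThan_atLeast0)
    also have "\<dots> = (\<Sum>j<p+q. - (?A $$ (i,j) * (sgnd p j * w $ j)))"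
      unfolding sum_distrib_left
    proof (rule sum.cong[OF refl])
      fix j assume "j \<in> {..<p+q}"
      hence j: "j < p + q" by simp
      show "sgnd p i * (?A $$ (i,j) * w $ j) = - (?A $$ (i,j) * (sgnd p j * w $ j))"
        using i j sba_carrier[OF M] by (auto simp: sba_index[OF M] sgnd_def)
    qed
    also have "\<dots> = (- (?A *\<^sub>v (Dm p (p+q) *\<^sub>v w))) $ i"
      unfolding Dm_vec[OF w] using i A w by (simp add: scalar_prod_def lessThan_atLeast0 sum_negf)
    finally show "(Dm p (p+q) *\<^sub>v (?A *\<^sub>v w)) $ i = (- (?A *\<^sub>v (Dm p (p+q) *\<^sub>v w))) $ i" .
  qed (use A in simp)
qed

lemma sum_sgnd: "(\<Sum>i<p+q. sgnd p i) = of_nat p - of_nat q"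
  unfolding sum_split_add by (simp add: sgnd_def)

lemma detJ: assumes A: "(Aint :: int mat) \<in> carrier_mat n n"
  shows "poly (char_poly (map_mat rat_of_int (J\<^sub>m n - 1\<^sub>m n - Aint))) (- y - 1) =
     (-1) ^ n * det (Ymat (map_mat rat_of_int Aint) y + J\<^sub>m n)"
proof -
  let ?C = "map_mat rat_of_int (J\<^sub>m n - 1\<^sub>m n - Aint)"
  have C: "?C \<in> carrier_mat n n" using A by (auto simp: all_ones_mat_def)
  have "poly (char_poly ?C) (- y - 1) = det (- char_matrix ?C (- y - 1))" by (rule char_poly_matrix[OF C])
  also have "- char_matrix ?C (- y - 1) = (-1) \<cdot>\<^sub>m (Ymat (map_mat rat_of_int Aint) y + J\<^sub>m n)"
    by (rule eq_matI) (use A in \<open>auto simp: char_matrix_def Ymat_def all_ones_mat_def\<close>)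
  also have "det \<dots> = (-1) ^ n * det (Ymat (map_mat rat_of_int Aint) y + J\<^sub>m n)"
    using A by (simp add: Ymat_def all_ones_mat_def)
  finally show ?thesis .
qed



theorem theorem3p1:
  fixes p q p' q' :: nat and M M' :: "int mat"
  assumes "sign_block p q M" and "sign_block p' q' M'"
    and "p + q = p' + q'"
    and "gen_cospectral (signed_bip_adj p q M) (signed_bip_adj p' q' M')"
    and "irreducible (map_poly rat_of_int (char_poly (signed_bip_adj p q M)))"
  shows "\<exists>Q Q1 Q2 :: rat mat.
     orthogonal_mat Q \<and> regular_mat Q \<and>
     transpose_mat Q * map_mat rat_of_int (signed_bip_adj p q M) * Q
       = map_mat rat_of_int (signed_bip_adj p' q' M') \<and>
     orthogonal_mat Q1 \<and> regular_mat Q1 \<and> orthogonal_mat Q2 \<and> regular_mat Q2 \<and>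
     ((p = p' \<and> q = q' \<and> Q1 \<in> carrier_mat p p \<and> Q2 \<in> carrier_mat q q \<and>
        Q = four_block_mat Q1 (0\<^sub>m p q) (0\<^sub>m q p) Q2) \<or>
      (p = q' \<and> q = p' \<and> Q1 \<in> carrier_mat p p \<and> Q2 \<in> carrier_mat q q \<and>
        Q = four_block_mat (0\<^sub>m p q) Q1 Q2 (0\<^sub>m q p)))"
proof -
  from assms(1) have M: "M \<in> carrier_mat p q" unfolding sign_block_def by simp
  from assms(2) have M': "M' \<in> carrier_mat p' q'" unfolding sign_block_def by simp
  define n where "n = p + q"
  have n': "p' + q' = n" using assms(3) n_def by simp
  define Aint where "Aint = signed_bip_adj p q M"
  define Bint where "Bint = signed_bip_adj p' q' M'"
  have Aint: "Aint \<in> carrier_mat n n" using sba_carrier[OF M] unfolding n_def Aint_def .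
  have Bint: "Bint \<in> carrier_mat n n" using sba_carrier[OF M'] unfolding n' Bint_def .
  define A where "A = map_mat rat_of_int Aint"
  define B where "B = map_mat rat_of_int Bint"
  have A: "A \<in> carrier_mat n n" using Aint unfolding A_def by simp
  have B: "B \<in> carrier_mat n n" using Bint unfolding B_def by simp
  have SA: "transpose_mat A = A" using sba_sym[OF M] unfolding A_def Aint_def .
  have SB: "transpose_mat B = B" using sba_sym[OF M'] unfolding B_def Bint_def .
  have cpA: "char_poly A = map_poly rat_of_int (char_poly Aint)"
    unfolding A_def by (rule of_int_hom.char_poly_hom[OF Aint])
  have cpB: "char_poly B = map_poly rat_of_int (char_poly Bint)"
    unfolding B_def by (rule of_int_hom.char_poly_hom[OF Bint])
  have dA: "dim_row Aint = n" and dB: "dim_row Bint = n" using Aint Bint by auto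
  from assms(4) have gc1: "char_poly Aint = char_poly Bint"
    and gc2: "char_poly (J\<^sub>m n - 1\<^sub>m n - Aint) = char_poly (J\<^sub>m n - 1\<^sub>m n - Bint)"
    unfolding gen_cospectral_def Aint_def[symmetric] Bint_def[symmetric] dA dB by auto
  have cp: "char_poly A = char_poly B" using cpA cpB gc1 by simp
  have irr: "irreducible (char_poly A)" using assms(5) cpA unfolding Aint_def by simp
  have CA: "J\<^sub>m n - 1\<^sub>m n - Aint \<in> carrier_mat n n" using Aint by (auto simp: all_ones_mat_def)
  have CB: "J\<^sub>m n - 1\<^sub>m n - Bint \<in> carrier_mat n n" using Bint by (auto simp: all_ones_mat_def)
  have dt: "det (Ymat A y + J\<^sub>m n) = det (Ymat B y + J\<^sub>m n)" for y
  proof -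
    have "(-1) ^ n * det (Ymat A y + J\<^sub>m n) = poly (char_poly (map_mat rat_of_int (J\<^sub>m n - 1\<^sub>m n - Aint))) (- y - 1)"
      using detJ[OF Aint, of y] unfolding A_def by simp
    also have "char_poly (map_mat rat_of_int (J\<^sub>m n - 1\<^sub>m n - Aint)) = map_poly rat_of_int (char_poly (J\<^sub>m n - 1\<^sub>m n - Aint))"
      by (rule of_int_hom.char_poly_hom[OF CA])
    also have "\<dots> = map_poly rat_of_int (char_poly (J\<^sub>m n - 1\<^sub>m n - Bint))" unfolding gc2 ..
    also have "\<dots> = char_poly (map_mat rat_of_int (J\<^sub>m n - 1\<^sub>m n - Bint))"
      by (rule of_int_hom.char_poly_hom[OF CB, symmetric])
    also have "poly \<dots> (- y - 1) = (-1) ^ n * det (Ymat B y + J\<^sub>m n)"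
      using detJ[OF Bint, of y] unfolding B_def by simp
    finally show ?thesis by simp
  qed
  have walk: "ones n \<bullet> pw A k (ones n) = ones n \<bullet> pw B k (ones n)" for k
    by (rule walk_from_det[OF A B cp dt])
  obtain Q where Q: "Q \<in> carrier_mat n n" and orth: "transpose_mat Q * Q = 1\<^sub>m n"
    and reg: "Q *\<^sub>v ones n = ones n" and comm: "A * Q = Q * B"
    using Q_exists[OF A B SA SB cp irr walk] by blast
  define Qt where "Qt = transpose_mat Q"
  have Qt: "Qt \<in> carrier_mat n n" using Q unfolding Qt_def by simp
  have QtQ: "Qt * Q = 1\<^sub>m n" using orth unfolding Qt_def .
  have QQt: "Q * Qt = 1\<^sub>m n" by (rule mat_mult_left_right_inverse[OF Qt Q QtQ])
  have Qt_Q: "Qt *\<^sub>v (Q *\<^sub>v v) = v" if v: "v \<in> carrier_vec n" for v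
    using assoc_mult_mat_vec[OF Qt Q v] QtQ v by simp
  have Q_Qt: "Q *\<^sub>v (Qt *\<^sub>v v) = v" if v: "v \<in> carrier_vec n" for v
    using assoc_mult_mat_vec[OF Q Qt v] QQt v by simp
  have QB: "Q *\<^sub>v (B *\<^sub>v v) = A *\<^sub>v (Q *\<^sub>v v)" if v: "v \<in> carrier_vec n" for v
    using assoc_mult_mat_vec[OF Q B v] assoc_mult_mat_vec[OF A Q v] comm by simp
  have QtA: "Qt *\<^sub>v (A *\<^sub>v v) = B *\<^sub>v (Qt *\<^sub>v v)" if v: "v \<in> carrier_vec n" for v
  proof -
    have Qtv: "Qt *\<^sub>v v \<in> carrier_vec n" using Qt v by simp
    have "Qt *\<^sub>v (A *\<^sub>v v) = Qt *\<^sub>v (A *\<^sub>v (Q *\<^sub>v (Qt *\<^sub>v v)))" using Q_Qt[OF v] by simp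
    also have "\<dots> = Qt *\<^sub>v (Q *\<^sub>v (B *\<^sub>v (Qt *\<^sub>v v)))" using QB[OF Qtv] by simp
    also have "\<dots> = B *\<^sub>v (Qt *\<^sub>v v)" using Qt_Q B Qtv by simp
    finally show ?thesis .
  qed
  define D where "D = Dm p n"
  define D' where "D' = Dm p' n"
  have D: "D \<in> carrier_mat n n" and D': "D' \<in> carrier_mat n n" unfolding D_def D'_def by auto
  have DA: "D *\<^sub>v (A *\<^sub>v w) = - (A *\<^sub>v (D *\<^sub>v w))" if w: "w \<in> carrier_vec n" for w
    using sba_anti[OF M, of w] w unfolding D_def A_def Aint_def n_def by simp
  have DB: "D' *\<^sub>v (B *\<^sub>v w) = - (B *\<^sub>v (D' *\<^sub>v w))" if w: "w \<in> carrier_vec n" for w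
    using sba_anti[OF M', of w] w unfolding D'_def B_def Bint_def n' by simp
  define R where "R = D * Q * D' * Qt"
  have R: "R \<in> carrier_mat n n" unfolding R_def using D Q D' Qt by (meson mult_carrier_mat)
  have Rv: "R *\<^sub>v w = D *\<^sub>v (Q *\<^sub>v (D' *\<^sub>v (Qt *\<^sub>v w)))" if w: "w \<in> carrier_vec n" for w
    unfolding R_def using D Q D' Qt w by (simp add: assoc_mult_mat_vec[of _ n n _ n])
  have RA: "R * A = A * R"
  proof (rule mat_eq_by_vec)
    show "R * A \<in> carrier_mat n n" "A * R \<in> carrier_mat n n" using R A by auto
    fix v :: "rat vec" assume v: "v \<in> carrier_vec n"
    have c1: "Qt *\<^sub>v v \<in> carrier_vec n" using Qt v by simp
    have c2: "D' *\<^sub>v (Qt *\<^sub>v v) \<in> carrier_vec n" using D' c1 by simp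
    have c3: "B *\<^sub>v (D' *\<^sub>v (Qt *\<^sub>v v)) \<in> carrier_vec n" using B c2 by simp
    have c4: "Q *\<^sub>v (D' *\<^sub>v (Qt *\<^sub>v v)) \<in> carrier_vec n" using Q c2 by simp
    have c5: "A *\<^sub>v (Q *\<^sub>v (D' *\<^sub>v (Qt *\<^sub>v v))) \<in> carrier_vec n" using A c4 by simp
    have c6: "D *\<^sub>v (Q *\<^sub>v (D' *\<^sub>v (Qt *\<^sub>v v))) \<in> carrier_vec n" using D c4 by simp
    have "(R * A) *\<^sub>v v = R *\<^sub>v (A *\<^sub>v v)" using R A v by simp
    also have "\<dots> = D *\<^sub>v (Q *\<^sub>v (D' *\<^sub>v (Qt *\<^sub>v (A *\<^sub>v v))))" using Rv A v by simp
    also have "\<dots> = D *\<^sub>v (Q *\<^sub>v (D' *\<^sub>v (B *\<^sub>v (Qt *\<^sub>v v))))" using QtA[OF v] by simp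
    also have "\<dots> = D *\<^sub>v (Q *\<^sub>v (- (B *\<^sub>v (D' *\<^sub>v (Qt *\<^sub>v v)))))" using DB[OF c1] by simp
    also have "\<dots> = D *\<^sub>v (- (Q *\<^sub>v (B *\<^sub>v (D' *\<^sub>v (Qt *\<^sub>v v)))))" using mat_vec_uminus[OF Q c3] by simp
    also have "\<dots> = D *\<^sub>v (- (A *\<^sub>v (Q *\<^sub>v (D' *\<^sub>v (Qt *\<^sub>v v)))))" using QB[OF c2] by simp
    also have "\<dots> = - (D *\<^sub>v (A *\<^sub>v (Q *\<^sub>v (D' *\<^sub>v (Qt *\<^sub>v v)))))" using mat_vec_uminus[OF D c5] by simp
    also have "\<dots> = - (- (A *\<^sub>v (D *\<^sub>v (Q *\<^sub>v (D' *\<^sub>v (Qt *\<^sub>v v))))))" using DA[OF c4] by simp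
    also have "\<dots> = A *\<^sub>v (R *\<^sub>v v)" using Rv[OF v] by simp
    also have "\<dots> = (A * R) *\<^sub>v v" using A R v by simp
    finally show "(R * A) *\<^sub>v v = (A * R) *\<^sub>v v" .
  qed
  have QtQt: "transpose_mat Qt * Qt = 1\<^sub>m n" using QQt unfolding Qt_def by simp
  have RR: "transpose_mat R * R = 1\<^sub>m n"
  proof (rule orth_by_scalar[OF R])
    fix u w :: "rat vec" assume u: "u \<in> carrier_vec n" and w: "w \<in> carrier_vec n"
    have "(R *\<^sub>v u) \<bullet> (R *\<^sub>v w) = (D *\<^sub>v (Q *\<^sub>v (D' *\<^sub>v (Qt *\<^sub>v u)))) \<bullet> (D *\<^sub>v (Q *\<^sub>v (D' *\<^sub>v (Qt *\<^sub>v w))))"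
      using Rv u w by simp
    also have "\<dots> = (Q *\<^sub>v (D' *\<^sub>v (Qt *\<^sub>v u))) \<bullet> (Q *\<^sub>v (D' *\<^sub>v (Qt *\<^sub>v w)))"
      unfolding D_def by (rule Dm_pres) (use Q D' Qt u w in auto)
    also have "\<dots> = (D' *\<^sub>v (Qt *\<^sub>v u)) \<bullet> (D' *\<^sub>v (Qt *\<^sub>v w))"
      by (rule orth_pres[OF Q orth]) (use D' Qt u w in auto)
    also have "\<dots> = (Qt *\<^sub>v u) \<bullet> (Qt *\<^sub>v w)"
      unfolding D'_def by (rule Dm_pres) (use Qt u w in auto)
    also have "\<dots> = u \<bullet> w" by (rule orth_pres[OF Qt QtQt u w])
    finally show "(R *\<^sub>v u) \<bullet> (R *\<^sub>v w) = u \<bullet> w" .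
  qed
  obtain s :: rat where s: "s = 1 \<or> s = -1" and Rs: "\<And>v. v \<in> carrier_vec n \<Longrightarrow> R *\<^sub>v v = s \<cdot>\<^sub>v v"
  proof (cases "R = 1\<^sub>m n")
    case True
    show ?thesis by (rule that[of 1]) (auto simp: True)
  next
    case False
    hence "R = - 1\<^sub>m n" using rigidity[OF A SA irr R RA RR] by simp
    show ?thesis by (rule that[of "-1"]) (auto simp: \<open>R = - 1\<^sub>m n\<close> uminus_mat_vec[of _ n] intro!: eq_vecI)
  qed
  have ent: "sgnd p i * Q $$ (i,j) * sgnd p' j = s * Q $$ (i,j)" if i: "i < n" and j: "j < n" for i j
  proof -
    let ?u = "unit_vec n j"
    have u: "?u \<in> carrier_vec n" by simp
    have Du: "D' *\<^sub>v ?u = sgnd p' j \<cdot>\<^sub>v ?u"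
      unfolding D'_def Dm_vec[OF u] by (rule eq_vecI) (use j in auto)
    have "R *\<^sub>v (Q *\<^sub>v ?u) = D *\<^sub>v (Q *\<^sub>v (D' *\<^sub>v ?u))" using Rv Qt_Q Q u by simp
    also have "\<dots> = D *\<^sub>v (sgnd p' j \<cdot>\<^sub>v (Q *\<^sub>v ?u))" unfolding Du mult_mat_vec[OF Q u] ..
    finally have "(D *\<^sub>v (sgnd p' j \<cdot>\<^sub>v (Q *\<^sub>v ?u))) $ i = (s \<cdot>\<^sub>v (Q *\<^sub>v ?u)) $ i"
      using Rs[of "Q *\<^sub>v ?u"] Q u by simp
    thus ?thesis unfolding D_def using Dm_vec[of "sgnd p' j \<cdot>\<^sub>v (Q *\<^sub>v ?u)" n p] Q i j mat_vec_unit[OF Q i j]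
      by (simp add: mult_ac)
  qed
  have rows: "(\<Sum>j<n. Q $$ (i,j) * Q $$ (i,j)) = 1" if i: "i < n" for i
  proof -
    have "(Q * Qt) $$ (i,i) = (\<Sum>j<n. Q $$ (i,j) * Q $$ (i,j))"
      using Q i unfolding Qt_def by (auto simp: scalar_prod_def lessThan_atLeast0)
    thus ?thesis using QQt i by simp
  qed
  have cols: "(\<Sum>i<n. Q $$ (i,j) * Q $$ (i,j)) = 1" if j: "j < n" for j
    using QtQ_entry[OF Q j j] orth j by simp
  have ent2: "sgnd p i * (Q $$ (i,j) * Q $$ (i,j)) = s * sgnd p' j * (Q $$ (i,j) * Q $$ (i,j))"
    if i: "i < n" and j: "j < n" for i j
  proof -
    have "s * sgnd p' j * (Q $$ (i,j) * Q $$ (i,j)) = (s * Q $$ (i,j)) * sgnd p' j * Q $$ (i,j)"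
      by (simp add: mult_ac)
    also have "\<dots> = sgnd p i * Q $$ (i,j) * (sgnd p' j * sgnd p' j) * Q $$ (i,j)"
      unfolding ent[OF i j, symmetric] by (simp add: mult_ac)
    also have "\<dots> = sgnd p i * (Q $$ (i,j) * Q $$ (i,j))" by (simp add: sgnd_sq mult_ac)
    finally show ?thesis by (rule sym)
  qed
  have tr: "of_nat p - of_nat q = s * (of_nat p' - of_nat q')"
  proof -
    have "(of_nat p - of_nat q :: rat) = (\<Sum>i<n. sgnd p i)" unfolding n_def sum_sgnd ..
    also have "\<dots> = (\<Sum>i<n. sgnd p i * (\<Sum>j<n. Q $$ (i,j) * Q $$ (i,j)))" using rows by simp
    also have "\<dots> = (\<Sum>i<n. \<Sum>j<n. sgnd p i * (Q $$ (i,j) * Q $$ (i,j)))" by (simp add: sum_distrib_left)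
    also have "\<dots> = (\<Sum>i<n. \<Sum>j<n. s * sgnd p' j * (Q $$ (i,j) * Q $$ (i,j)))" by (intro sum.cong refl ent2) auto
    also have "\<dots> = (\<Sum>j<n. \<Sum>i<n. s * sgnd p' j * (Q $$ (i,j) * Q $$ (i,j)))" by (rule sum.swap)
    also have "\<dots> = (\<Sum>j<n. s * sgnd p' j * (\<Sum>i<n. Q $$ (i,j) * Q $$ (i,j)))" by (simp add: sum_distrib_left)
    also have "\<dots> = (\<Sum>j<n. s * sgnd p' j)" using cols by simp
    also have "\<dots> = s * (\<Sum>j<p'+q'. sgnd p' j)" unfolding n' by (simp add: sum_distrib_left)
    also have "\<dots> = s * (of_nat p' - of_nat q')" unfolding sum_sgnd ..
    finally show ?thesis .
  qed
  have sumeq: "(of_nat p + of_nat q :: rat) = of_nat p' + of_nat q'" using assms(3) by (metis of_nat_add)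
  have Qo: "orthogonal_mat Q" using Q orth unfolding orthogonal_mat_def by simp
  have Qr: "regular_mat Q" using Q reg unfolding regular_mat_def ones_def by simp
  have conj: "transpose_mat Q * A * Q = B"
  proof -
    have "transpose_mat Q * A * Q = Qt * (A * Q)" unfolding Qt_def by (rule assoc_mult_mat[OF _ A Q]) (use Q in simp)
    also have "\<dots> = Qt * (Q * B)" unfolding comm ..
    also have "\<dots> = (Qt * Q) * B" by (rule assoc_mult_mat[OF Qt Q B, symmetric])
    also have "\<dots> = B" using QtQ B by simp
    finally show ?thesis .
  qed
  from s show ?thesis
  proof
    assume s1: "s = 1"
    have "of_nat p = (of_nat p' :: rat)" using tr sumeq s1 by simp
    hence pp: "p = p'" by simp
    hence qq: "q = q'" using assms(3) by simp
    have z: "Q $$ (i,j) = 0" if "i < p+q" "j < p+q" "(i < p) \<noteq> (j < p)" for i j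
      using ent[of i j] that s1 pp unfolding n_def by (auto simp: sgnd_def)
    obtain Q1 Q2 where "orthogonal_mat Q1 \<and> regular_mat Q1 \<and> orthogonal_mat Q2 \<and> regular_mat Q2 \<and>
     Q1 \<in> carrier_mat p p \<and> Q2 \<in> carrier_mat q q \<and> Q = four_block_mat Q1 (0\<^sub>m p q) (0\<^sub>m q p) Q2"
      using block_diag[of Q p q] Q orth reg z unfolding n_def by blast
    thus ?thesis using Qo Qr conj pp qq unfolding A_def B_def Aint_def Bint_def by blast
  next
    assume s1: "s = -1"
    have "of_nat p = (of_nat q' :: rat)" using tr sumeq s1 by simp
    hence pp: "p = q'" by simp
    hence qq: "q = p'" using assms(3) by simp
    have z: "Q $$ (i,j) = 0" if "i < p+q" "j < p+q" "(i < p) = (j < q)" for i j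
      using ent[of i j] that s1 qq unfolding n_def by (auto simp: sgnd_def)
    obtain Q1 Q2 where "orthogonal_mat Q1 \<and> regular_mat Q1 \<and> orthogonal_mat Q2 \<and> regular_mat Q2 \<and>
     Q1 \<in> carrier_mat p p \<and> Q2 \<in> carrier_mat q q \<and> Q = four_block_mat (0\<^sub>m p q) Q1 Q2 (0\<^sub>m q p)"
      using block_anti[of Q p q] Q orth reg z unfolding n_def by blast
    thus ?thesis using Qo Qr conj pp qq unfolding A_def B_def Aint_def Bint_def by blast
  qed
qed


end
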